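(* Let $\ell\ge2$ and let $(\chi_1,\chi_2)$, $(\chi_3,\chi_4)$ be $\mathbf{ss}$-pairs. For $i\in[1,\ell-1]$ let $g_i=\begin{pmatrix}1&0\\ \epsilon\pi^i&1\end{pmatrix}$, $\mathrm B^i=\mathrm B(\mathfrak o_\ell)\cap g_i\mathrm B(\mathfrak o_\ell)g_i^{-1}$, and $(\chi_3,\chi_4)^{g_i}$ the character $x\mapsto(\chi_3,\chi_4)(g_i^{-1}xg_i)$ of $g_i\mathrm B(\mathfrak o_\ell)g_i^{-1}$. Then $\delta_i=\mathrm{Ind}_{\mathrm B^i}^{\mathrm B(\mathfrak o_\ell)}\big((\chi_1,\chi_2)\otimes(\chi_3,\chi_4)^{g_i}\big)$ is irreducible for every $i\in[1,\ell-1]$.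
   Context: Let $\mathcal O$ be a complete discrete valuation ring with maximal ideal $\mathfrak p=\pi\mathcal O$ and finite residue field of odd characteristic. Let $\mathfrak O=\mathcal O[\vartheta]$ be the unramified quadratic extension, with $\vartheta^2\in\mathcal O^\times$ a non-square, and Galois involution $x\mapsto x^\circ$, $\vartheta^\circ=-\vartheta$. Let $\mathfrak o_\ell=\mathcal O/\mathfrak p^\ell$, $\mathfrak O_\ell=\mathfrak O/\pi^\ell\mathfrak O$. $\mathrm G$ is $\mathrm{GL}_2$ (with $R_\ell=\mathfrak o_\ell$, $\epsilon=1$) or $\mathrm{GU}_2$ (with $\mathrm{GU}_2(\mathfrak o_\ell)=\{A\in\mathrm{GL}_2(\mathfrak O_\ell):A^\star A=I\}$, $(a_{ij})^\star=W(a_{ji}^\circ)W^{-1}$, $W=\begin{pmatrix}0&1\\1&0\end{pmatrix}$, $R_\ell=\mathfrak O_\ell$, $\epsilon=\vartheta$). $\mathrm B(\mathfrak o_\ell)$ is the group of upper triangular matrices in $\mathrm G(\mathfrak o_\ell)$. For characters $\chi,\chi'$ of $R_\ell^\times$, $(\chi,\chi')$ is the character $\begin{pmatrix}a&b\\0&c\end{pmatrix}\mapsto\chi(a)\chi'(c)$ of $\mathrm B(\mathfrak o_\ell)$; it is an $\mathbf{ss}$-pair if $\chi\chi'^{-1}$ is nontrivial on $1+\pi^{\ell-1}\mathfrak o_\ell$. *)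

theory Defs
  imports Complex_Main
begin

text \<open>O is modelled as a type 'a of class idom; pi is the uniformizer.
  dvr_unif: every nonzero element is a unit times a power of pi, pi nonzero non-unit
  (this makes O a discrete valuation ring with maximal ideal pi O).\<close>
definition dvr_unif :: "'a::idom \<Rightarrow> bool" where
  "dvr_unif p \<longleftrightarrow> p \<noteq> 0 \<and> \<not> p dvd 1 \<and>
     (\<forall>x. x \<noteq> 0 \<longrightarrow> (\<exists>u n. u dvd 1 \<and> x = u * p ^ n))"

definition pi_complete :: "'a::idom \<Rightarrow> bool" where
  "pi_complete p \<longleftrightarrow> (\<forall>x::nat \<Rightarrow> 'a. (\<forall>n. p ^ n dvd (x (Suc n) - x n)) \<longrightarrow>
       (\<exists>y. \<forall>n. p ^ n dvd (y - x n)))"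

definition residue_field :: "'a::idom \<Rightarrow> 'a set set" where
  "residue_field p = range (\<lambda>x. {y. p dvd (x - y)})"

section \<open>The unramified quadratic extension O[theta], theta^2 = d, as pairs (a,b) = a + b theta\<close>

type_synonym 'a ext = "'a \<times> 'a"

definition eadd :: "'a::comm_ring_1 ext \<Rightarrow> 'a ext \<Rightarrow> 'a ext" where
  "eadd x y = (fst x + fst y, snd x + snd y)"

definition emul :: "'a::comm_ring_1 \<Rightarrow> 'a ext \<Rightarrow> 'a ext \<Rightarrow> 'a ext" where
  "emul d x y = (fst x * fst y + d * (snd x * snd y), fst x * snd y + snd x * fst y)"

definition econj :: "'a::comm_ring_1 ext \<Rightarrow> 'a ext" where
  "econj x = (fst x, - snd x)"

section \<open>Reduction modulo pi^l: R_l elements are residue classes (sets of pairs)\<close>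

type_synonym 'a cl = "('a \<times> 'a) set"

definition econg :: "'a::comm_ring_1 \<Rightarrow> nat \<Rightarrow> 'a ext \<Rightarrow> 'a ext \<Rightarrow> bool" where
  "econg p l x y \<longleftrightarrow> p ^ l dvd (fst x - fst y) \<and> p ^ l dvd (snd x - snd y)"

definition ecls :: "'a::comm_ring_1 \<Rightarrow> nat \<Rightarrow> 'a ext \<Rightarrow> 'a cl" where
  "ecls p l x = {y. econg p l x y}"

text \<open>The big ring O_l = O[theta]/pi^l and the small ring o_l = O/p^l (as a subring).\<close>
definition bigO :: "'a::comm_ring_1 \<Rightarrow> nat \<Rightarrow> 'a cl set" where
  "bigO p l = range (ecls p l)"

definition smallo :: "'a::comm_ring_1 \<Rightarrow> nat \<Rightarrow> 'a cl set" where
  "smallo p l = range (\<lambda>a. ecls p l (a, 0))"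

definition qadd :: "'a::comm_ring_1 \<Rightarrow> nat \<Rightarrow> 'a cl \<Rightarrow> 'a cl \<Rightarrow> 'a cl" where
  "qadd p l X Y = (\<Union>x\<in>X. \<Union>y\<in>Y. ecls p l (eadd x y))"

definition qmul :: "'a::comm_ring_1 \<Rightarrow> 'a \<Rightarrow> nat \<Rightarrow> 'a cl \<Rightarrow> 'a cl \<Rightarrow> 'a cl" where
  "qmul d p l X Y = (\<Union>x\<in>X. \<Union>y\<in>Y. ecls p l (emul d x y))"

definition qconj :: "'a::comm_ring_1 \<Rightarrow> nat \<Rightarrow> 'a cl \<Rightarrow> 'a cl" where
  "qconj p l X = (\<Union>x\<in>X. ecls p l (econj x))"

definition qzero :: "'a::comm_ring_1 \<Rightarrow> nat \<Rightarrow> 'a cl" where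
  "qzero p l = ecls p l (0, 0)"

definition qone :: "'a::comm_ring_1 \<Rightarrow> nat \<Rightarrow> 'a cl" where
  "qone p l = ecls p l (1, 0)"

definition qunits :: "'a::comm_ring_1 \<Rightarrow> 'a \<Rightarrow> nat \<Rightarrow> 'a cl set \<Rightarrow> 'a cl set" where
  "qunits d p l R = {X \<in> R. \<exists>Y\<in>R. qmul d p l X Y = qone p l}"

text \<open>R_l: o_l for GL_2 (unitary = False), O_l for GU_2 (unitary = True).\<close>
definition Rl :: "'a::comm_ring_1 \<Rightarrow> nat \<Rightarrow> bool \<Rightarrow> 'a cl set" where
  "Rl p l unitary = (if unitary then bigO p l else smallo p l)"

text \<open>epsilon = 1 for GL_2, epsilon = theta for GU_2.\<close>
definition epsi :: "bool \<Rightarrow> 'a::comm_ring_1 ext" where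
  "epsi unitary = (if unitary then (0, 1) else (1, 0))"

section \<open>2x2 matrices (a, b, c, e) = [[a, b], [c, e]] over R_l\<close>

type_synonym 'a mat = "'a cl \<times> 'a cl \<times> 'a cl \<times> 'a cl"

definition mats :: "'a cl set \<Rightarrow> 'a mat set" where
  "mats R = {(a, b, c, e). a \<in> R \<and> b \<in> R \<and> c \<in> R \<and> e \<in> R}"

definition mmul :: "'a::comm_ring_1 \<Rightarrow> 'a \<Rightarrow> nat \<Rightarrow> 'a mat \<Rightarrow> 'a mat \<Rightarrow> 'a mat" where
  "mmul d p l A B = (case A of (a, b, c, e) \<Rightarrow> case B of (a', b', c', e') \<Rightarrow>
     (qadd p l (qmul d p l a a') (qmul d p l b c'), qadd p l (qmul d p l a b') (qmul d p l b e'),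
      qadd p l (qmul d p l c a') (qmul d p l e c'), qadd p l (qmul d p l c b') (qmul d p l e e')))"

definition mone :: "'a::comm_ring_1 \<Rightarrow> nat \<Rightarrow> 'a mat" where
  "mone p l = (qone p l, qzero p l, qzero p l, qone p l)"

definition Wmat :: "'a::comm_ring_1 \<Rightarrow> nat \<Rightarrow> 'a mat" where
  "Wmat p l = (qzero p l, qone p l, qone p l, qzero p l)"

definition ctrans :: "'a::comm_ring_1 \<Rightarrow> nat \<Rightarrow> 'a mat \<Rightarrow> 'a mat" where
  "ctrans p l A = (case A of (a, b, c, e) \<Rightarrow> (qconj p l a, qconj p l c, qconj p l b, qconj p l e))"

text \<open>A^star = W (a_ji conj) W^{-1}; note W^{-1} = W.\<close>
definition mstar :: "'a::comm_ring_1 \<Rightarrow> 'a \<Rightarrow> nat \<Rightarrow> 'a mat \<Rightarrow> 'a mat" where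
  "mstar d p l A = mmul d p l (Wmat p l) (mmul d p l (ctrans p l A) (Wmat p l))"

text \<open>G(o_l): GL_2(o_l), resp. GU_2(o_l) = {A in GL_2(O_l). A^star A = I}.\<close>
definition Gl :: "'a::comm_ring_1 \<Rightarrow> 'a \<Rightarrow> nat \<Rightarrow> bool \<Rightarrow> 'a mat set" where
  "Gl d p l unitary = {A \<in> mats (Rl p l unitary).
      (\<exists>B\<in>mats (Rl p l unitary). mmul d p l A B = mone p l \<and> mmul d p l B A = mone p l) \<and>
      (unitary \<longrightarrow> mmul d p l (mstar d p l A) A = mone p l)}"

definition Bor :: "'a::comm_ring_1 \<Rightarrow> 'a \<Rightarrow> nat \<Rightarrow> bool \<Rightarrow> 'a mat set" where
  "Bor d p l unitary = {A \<in> Gl d p l unitary. fst (snd (snd A)) = qzero p l}"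

definition minv :: "'a::comm_ring_1 \<Rightarrow> 'a \<Rightarrow> nat \<Rightarrow> 'a cl set \<Rightarrow> 'a mat \<Rightarrow> 'a mat" where
  "minv d p l R A = (THE B. B \<in> mats R \<and> mmul d p l A B = mone p l \<and> mmul d p l B A = mone p l)"

definition gmat :: "'a::comm_ring_1 \<Rightarrow> 'a \<Rightarrow> nat \<Rightarrow> bool \<Rightarrow> nat \<Rightarrow> 'a mat" where
  "gmat d p l unitary i =
     (qone p l, qzero p l, ecls p l (emul d (epsi unitary) (p ^ i, 0)), qone p l)"

definition Bsub :: "'a::comm_ring_1 \<Rightarrow> 'a \<Rightarrow> nat \<Rightarrow> bool \<Rightarrow> nat \<Rightarrow> 'a mat set" where
  "Bsub d p l unitary i = {x \<in> Bor d p l unitary. \<exists>y\<in>Bor d p l unitary.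
      x = mmul d p l (gmat d p l unitary i)
            (mmul d p l y (minv d p l (Rl p l unitary) (gmat d p l unitary i)))}"

definition is_char :: "'a::comm_ring_1 \<Rightarrow> 'a \<Rightarrow> nat \<Rightarrow> 'a cl set \<Rightarrow> ('a cl \<Rightarrow> complex) \<Rightarrow> bool" where
  "is_char d p l R \<chi> \<longleftrightarrow> (\<forall>x\<in>qunits d p l R. \<chi> x \<noteq> 0) \<and>
     (\<forall>x\<in>qunits d p l R. \<forall>y\<in>qunits d p l R. \<chi> (qmul d p l x y) = \<chi> x * \<chi> y)"

definition pchar :: "('a cl \<Rightarrow> complex) \<Rightarrow> ('a cl \<Rightarrow> complex) \<Rightarrow> 'a mat \<Rightarrow> complex" where
  "pchar \<chi> \<chi>' A = \<chi> (fst A) * \<chi>' (snd (snd (snd A)))"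

definition ss_pair :: "'a::comm_ring_1 \<Rightarrow> nat \<Rightarrow> ('a cl \<Rightarrow> complex) \<Rightarrow> ('a cl \<Rightarrow> complex) \<Rightarrow> bool" where
  "ss_pair p l \<chi> \<chi>' \<longleftrightarrow>
     (\<exists>a. \<chi> (ecls p l (1 + p ^ (l - 1) * a, 0)) * inverse (\<chi>' (ecls p l (1 + p ^ (l - 1) * a, 0))) \<noteq> 1)"

definition ind_space :: "'g set \<Rightarrow> ('g \<Rightarrow> 'g \<Rightarrow> 'g) \<Rightarrow> 'g set \<Rightarrow> ('g \<Rightarrow> complex) \<Rightarrow> ('g \<Rightarrow> complex) set" where
  "ind_space G m H \<theta> = {f. (\<forall>x. x \<notin> G \<longrightarrow> f x = 0) \<and> (\<forall>h\<in>H. \<forall>x\<in>G. f (m h x) = \<theta> h * f x)}"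

definition rtrans :: "'g set \<Rightarrow> ('g \<Rightarrow> 'g \<Rightarrow> 'g) \<Rightarrow> 'g \<Rightarrow> ('g \<Rightarrow> complex) \<Rightarrow> ('g \<Rightarrow> complex)" where
  "rtrans G m g f = (\<lambda>x. if x \<in> G then f (m x g) else 0)"

definition csubspace :: "('g \<Rightarrow> complex) set \<Rightarrow> bool" where
  "csubspace W \<longleftrightarrow> (\<lambda>x. 0) \<in> W \<and> (\<forall>f\<in>W. \<forall>g\<in>W. (\<lambda>x. f x + g x) \<in> W) \<and>
     (\<forall>c. \<forall>f\<in>W. (\<lambda>x. c * f x) \<in> W)"

definition irred_ind :: "'g set \<Rightarrow> ('g \<Rightarrow> 'g \<Rightarrow> 'g) \<Rightarrow> 'g set \<Rightarrow> ('g \<Rightarrow> complex) \<Rightarrow> bool" where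
  "irred_ind G m H \<theta> \<longleftrightarrow> ind_space G m H \<theta> \<noteq> {\<lambda>x. 0} \<and>
     (\<forall>W. W \<subseteq> ind_space G m H \<theta> \<and> csubspace W \<and> (\<forall>g\<in>G. \<forall>f\<in>W. rtrans G m g f \<in> W)
        \<longrightarrow> W = {\<lambda>x. 0} \<or> W = ind_space G m H \<theta>)"

end

theory Submission
  imports Defs
begin


lemma csub_add: "csubspace W \<Longrightarrow> f \<in> W \<Longrightarrow> g \<in> W \<Longrightarrow> (\<lambda>x. f x + g x) \<in> W"
  unfolding csubspace_def by blast

lemma rtrans_app[simp]: "rtrans G m g f x = (if x \<in> G then f (m x g) else 0)"
  by (simp add: rtrans_def)

lemma csub_sum:
  assumes "csubspace W" "finite S" "\<forall>s\<in>S. g s \<in> W"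
  shows "(\<lambda>x. \<Sum>s\<in>S. c s * g s x) \<in> W"
  using assms(2,3)
proof (induction S rule: finite_induct)
  case empty
  then show ?case using assms(1) unfolding csubspace_def by simp
next
  case (insert s S)
  have a: "(\<lambda>x. c s * g s x) \<in> W" using assms(1) insert unfolding csubspace_def by blast
  have b: "(\<lambda>x. \<Sum>s\<in>S. c s * g s x) \<in> W" using insert by blast
  have "(\<lambda>x. (c s * g s x) + (\<Sum>s\<in>S. c s * g s x)) \<in> W"
    using csub_add[OF assms(1) a b] .
  then show ?case using insert by simp
qed

lemma mackey_irred:
  fixes G H :: "'g set" and m :: "'g \<Rightarrow> 'g \<Rightarrow> 'g" and e :: 'g and \<theta> :: "'g \<Rightarrow> complex"
  assumes fin: "finite G"
  and closed: "\<forall>x\<in>G. \<forall>y\<in>G. m x y \<in> G"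
  and assoc: "\<forall>x\<in>G. \<forall>y\<in>G. \<forall>z\<in>G. m (m x y) z = m x (m y z)"
  and eH: "e \<in> H" and HG: "H \<subseteq> G"
  and idl: "\<forall>x\<in>G. m e x = x" and idr: "\<forall>x\<in>G. m x e = x"
  and inv: "\<forall>x\<in>G. \<exists>y\<in>G. m x y = e \<and> m y x = e"
  and Hclosed: "\<forall>x\<in>H. \<forall>y\<in>H. m x y \<in> H"
  and hom: "\<forall>x\<in>H. \<forall>y\<in>H. \<theta> (m x y) = \<theta> x * \<theta> y"
  and nz: "\<forall>x\<in>H. \<theta> x \<noteq> 0"
  and mack: "\<forall>x\<in>G-H. \<exists>k\<in>H. \<exists>k'\<in>H. m x k = m k' x \<and> \<theta> k \<noteq> \<theta> k'"
  shows "irred_ind G m H \<theta>"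
proof -
  define iv where "iv x = (SOME y. y \<in> G \<and> m x y = e \<and> m y x = e)" for x
  have iv: "iv x \<in> G" "m x (iv x) = e" "m (iv x) x = e" if "x \<in> G" for x
    using someI_ex[of "\<lambda>y. y \<in> G \<and> m x y = e \<and> m y x = e"] inv that unfolding iv_def by blast+
  have eG: "e \<in> G" using eH HG by blast
  have finH: "finite H" using fin HG finite_subset by blast
  have lcancel: "y = z" if "x \<in> G" "y \<in> G" "z \<in> G" "m x y = m x z" for x y z
  proof -
    have "m (m (iv x) x) y = m (m (iv x) x) z" using that assoc iv by metis
    then show ?thesis using that iv idl by simp
  qed
  have rcancel: "y = z" if "x \<in> G" "y \<in> G" "z \<in> G" "m y x = m z x" for x y z
  proof -
    have "m y (m x (iv x)) = m z (m x (iv x))" using that assoc iv by (metis)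
    then show ?thesis using that iv idr by simp
  qed
  have ivuniq: "iv x = y" if "x \<in> G" "y \<in> G" "m x y = e" for x y
    using lcancel[of x "iv x" y] that iv by simp
  have Hinv: "iv h \<in> H" if "h \<in> H" for h
  proof -
    have hG: "h \<in> G" using that HG by blast
    have inj: "inj_on (m h) H"
      by (rule inj_onI) (use lcancel hG HG in blast)
    have "m h ` H \<subseteq> H" using Hclosed that by blast
    hence "m h ` H = H" using inj finH by (simp add: endo_inj_surj)
    then obtain k where "k \<in> H" "m h k = e" using eH by (metis imageE)
    then show ?thesis using ivuniq[of h k] hG HG by blast
  qed
  have th_e: "\<theta> e = 1"
  proof -
    have "\<theta> e = \<theta> e * \<theta> e" using hom eH idl eG by (metis)
    then show ?thesis using nz eH by (metis mult_cancel_left2 mult.commute)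
  qed
  have th_iv: "\<theta> (iv h) * \<theta> h = 1" if "h \<in> H" for h
    using hom Hinv[OF that] that iv[of h] HG th_e by (metis subsetD)
  define V where "V = ind_space G m H \<theta>"
  define \<phi> where "\<phi> x = (if x \<in> H then \<theta> x else 0)" for x
  have phiV: "\<phi> \<in> V"
    unfolding V_def ind_space_def
  proof (intro CollectI conjI allI impI ballI)
    fix x assume "x \<notin> G" then show "\<phi> x = 0" using HG \<phi>_def by auto
  next
    fix h x assume h: "h \<in> H" and x: "x \<in> G"
    show "\<phi> (m h x) = \<theta> h * \<phi> x"
    proof (cases "x \<in> H")
      case True then show ?thesis using hom h Hclosed \<phi>_def by simp
    next
      case False
      have "m h x \<notin> H"
      proof
        assume "m h x \<in> H"
        hence "m (iv h) (m h x) \<in> H" using Hclosed Hinv h by blast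
        moreover have "m (iv h) (m h x) = x" using assoc iv h HG x idl
          by (metis subsetD)
        ultimately show False using False by simp
      qed
      then show ?thesis using False \<phi>_def by simp
    qed
  qed
  have phinz: "\<phi> \<noteq> (\<lambda>x. 0)"
  proof
    assume "\<phi> = (\<lambda>x. 0)" hence "\<phi> e = 0" by simp
    then show False using \<phi>_def eH th_e by simp
  qed
  have Vprop1: "f (m h x) = \<theta> h * f x" if "f \<in> V" "h \<in> H" "x \<in> G" for f h x
    using that unfolding V_def ind_space_def by auto
  have Vprop2: "f y = 0" if "f \<in> V" "y \<notin> G" for f y
    using that unfolding V_def ind_space_def by auto
  show ?thesis unfolding irred_ind_def
  proof (intro conjI allI impI)
    show "ind_space G m H \<theta> \<noteq> {\<lambda>x. 0}" using phiV phinz V_def by blast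
  next
    fix W assume W: "W \<subseteq> ind_space G m H \<theta> \<and> csubspace W \<and> (\<forall>g\<in>G. \<forall>f\<in>W. rtrans G m g f \<in> W)"
    have WV: "W \<subseteq> V" and cs: "csubspace W" and tr: "\<forall>g\<in>G. \<forall>f\<in>W. rtrans G m g f \<in> W"
      using W V_def by auto
    have zW: "(\<lambda>x. 0) \<in> W" using cs unfolding csubspace_def by blast
    have scal: "(\<lambda>x. c * f x) \<in> W" if "f \<in> W" for c f using cs that unfolding csubspace_def by blast
    show "W = {\<lambda>x. 0} \<or> W = ind_space G m H \<theta>"
    proof (cases "W = {\<lambda>x. 0}")
      case True then show ?thesis by simp
    next
      case False
      then obtain f where fW: "f \<in> W" and fnz: "f \<noteq> (\<lambda>x. 0)" using zW by blast
      then obtain x0 where x0: "f x0 \<noteq> 0" by (meson ext)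
      have fV: "f \<in> V" using fW WV by blast
      have x0G: "x0 \<in> G" using Vprop2[OF fV] x0 by blast
      define f1 where "f1 = rtrans G m x0 f"
      have f1W: "f1 \<in> W" using tr x0G fW f1_def by blast
      have f1V: "f1 \<in> V" using f1W WV by blast
      have f1e: "f1 e = f x0" unfolding f1_def rtrans_def using eG idl x0G by simp
      define P where "P = (\<lambda>x. \<Sum>h\<in>H. inverse (\<theta> h) * rtrans G m h f1 x)"
      have PW: "P \<in> W" unfolding P_def
        by (rule csub_sum[OF cs finH]) (use tr HG f1W in blast)
      have Pval: "P x = (of_nat (card H) * f1 e) * \<phi> x" for x
      proof (cases "x \<in> G")
        case False
        then show ?thesis using P_def rtrans_def \<phi>_def HG by auto
      next
        case xG: True
        show ?thesis
        proof (cases "x \<in> H")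
          case xH: True
          have "P x = (\<Sum>h\<in>H. \<theta> x * f1 e)"
            unfolding P_def
          proof (rule sum.cong[OF refl])
            fix h assume h: "h \<in> H"
            have mxh: "m x h \<in> H" using Hclosed xH h by blast
            have "rtrans G m h f1 x = f1 (m x h)" using rtrans_def xG by simp
            also have "\<dots> = f1 (m (m x h) e)" using idr mxh HG by auto
            also have "\<dots> = \<theta> (m x h) * f1 e" using Vprop1[OF f1V mxh eG] .
            also have "\<dots> = \<theta> x * \<theta> h * f1 e" using hom xH h by simp
            finally show "inverse (\<theta> h) * rtrans G m h f1 x = \<theta> x * f1 e"
              using nz h by (simp add: field_simps)
          qed
          then show ?thesis using xH \<phi>_def by simp
        next
          case xH: False
          obtain k k' where k: "k \<in> H" and k': "k' \<in> H" and kk: "m x k = m k' x"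
            and ne: "\<theta> k \<noteq> \<theta> k'" using mack xG xH by blast
          have kG: "k \<in> G" "k' \<in> G" using k k' HG by auto
          define S where "S = (\<Sum>h\<in>H. inverse (\<theta> h) * f1 (m x h))"
          have PS: "P x = S" unfolding P_def S_def using rtrans_def xG by simp
          have inj: "inj_on (m k) H" by (rule inj_onI) (use lcancel kG HG in blast)
          have "m k ` H \<subseteq> H" using Hclosed k by blast
          hence img: "m k ` H = H" using inj finH by (simp add: endo_inj_surj)
          have "S = (\<Sum>h\<in>m k ` H. inverse (\<theta> h) * f1 (m x h))" using img S_def by simp
          also have "\<dots> = (\<Sum>h\<in>H. inverse (\<theta> (m k h)) * f1 (m x (m k h)))"
            by (subst sum.reindex[OF inj]) simp
          also have "\<dots> = (\<Sum>h\<in>H. (inverse (\<theta> k) * \<theta> k') * (inverse (\<theta> h) * f1 (m x h)))"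
          proof (rule sum.cong[OF refl])
            fix h assume h: "h \<in> H"
            have hG: "h \<in> G" using h HG by blast
            have "m x (m k h) = m (m x k) h" using assoc xG kG hG by simp
            also have "\<dots> = m k' (m x h)" using kk assoc xG kG hG by simp
            finally have "f1 (m x (m k h)) = \<theta> k' * f1 (m x h)"
              using Vprop1[OF f1V k'] closed xG hG by simp
            then show "inverse (\<theta> (m k h)) * f1 (m x (m k h)) = (inverse (\<theta> k) * \<theta> k') * (inverse (\<theta> h) * f1 (m x h))"
              using hom k h by (simp add: field_simps)
          qed
          also have "\<dots> = (inverse (\<theta> k) * \<theta> k') * S" unfolding S_def by (simp add: sum_distrib_left)
          finally have "S * (1 - inverse (\<theta> k) * \<theta> k') = 0" by (simp add: algebra_simps)
          moreover have "inverse (\<theta> k) * \<theta> k' \<noteq> 1" using ne nz k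
            by (metis divide_inverse_commute divide_self_if mult.commute right_inverse_eq)
          ultimately have "S = 0" by simp
          then show ?thesis using PS xH \<phi>_def by simp
        qed
      qed
      have cH: "of_nat (card H) \<noteq> (0::complex)" using finH eH by auto
      have "(\<lambda>x. inverse (of_nat (card H) * f1 e) * P x) \<in> W" using scal PW by blast
      moreover have "(\<lambda>x. inverse (of_nat (card H) * f1 e) * P x) = \<phi>"
        using Pval cH f1e x0 by (simp add: field_simps)
      ultimately have phiW: "\<phi> \<in> W" by simp
      have "V \<subseteq> W"
      proof
        fix f assume fV: "f \<in> V"
        define F where "F = (\<lambda>x. \<Sum>y\<in>G. (inverse (of_nat (card H)) * f (iv y)) * rtrans G m y \<phi> x)"
        have FW: "F \<in> W" unfolding F_def
          by (rule csub_sum[OF cs fin]) (use tr phiW in blast)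
        have "F = f"
        proof
          fix x
          show "F x = f x"
          proof (cases "x \<in> G")
            case False then show ?thesis using F_def rtrans_def Vprop2[OF fV] by simp
          next
            case xG: True
            have injx: "inj_on (m (iv x)) G" by (rule inj_onI) (use lcancel iv xG in blast)
            have "m (iv x) ` G \<subseteq> G" using closed iv xG by blast
            hence img: "m (iv x) ` G = G" using injx fin by (simp add: endo_inj_surj)
            have "(\<Sum>y\<in>G. f (iv y) * rtrans G m y \<phi> x) = (\<Sum>y\<in>G. f (iv y) * \<phi> (m x y))"
              using rtrans_def xG by simp
            also have "\<dots> = (\<Sum>w\<in>m (iv x) ` G. f (iv w) * \<phi> (m x w))" using img by simp
            also have "\<dots> = (\<Sum>w\<in>G. f (iv (m (iv x) w)) * \<phi> (m x (m (iv x) w)))"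
              by (subst sum.reindex[OF injx]) simp
            also have "\<dots> = (\<Sum>w\<in>G. f (m (iv w) x) * \<phi> w)"
            proof (rule sum.cong[OF refl])
              fix w assume wG: "w \<in> G"
              have "m x (m (iv x) w) = w" using assoc xG iv wG idl by (metis)
              moreover have "iv (m (iv x) w) = m (iv w) x"
              proof (rule ivuniq)
                show "m (iv x) w \<in> G" "m (iv w) x \<in> G" using closed iv xG wG by auto
                have "m (m (iv x) w) (m (iv w) x) = m (iv x) (m (m w (iv w)) x)"
                  using assoc iv xG wG closed by (metis)
                also have "\<dots> = e" using iv xG wG idl by simp
                finally show "m (m (iv x) w) (m (iv w) x) = e" .
              qed
              ultimately show "f (iv (m (iv x) w)) * \<phi> (m x (m (iv x) w)) = f (m (iv w) x) * \<phi> w" by simp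
            qed
            also have "\<dots> = (\<Sum>w\<in>H. f (m (iv w) x) * \<phi> w)"
              by (rule sum.mono_neutral_right[OF fin HG]) (simp add: \<phi>_def)
            also have "\<dots> = (\<Sum>w\<in>H. f x)"
            proof (rule sum.cong[OF refl])
              fix w assume wH: "w \<in> H"
              have "f (m (iv w) x) = \<theta> (iv w) * f x" using Vprop1[OF fV Hinv[OF wH] xG] .
              then show "f (m (iv w) x) * \<phi> w = f x" using th_iv[OF wH] wH \<phi>_def
                by (simp add: algebra_simps)
            qed
            finally have "(\<Sum>y\<in>G. f (iv y) * rtrans G m y \<phi> x) = of_nat (card H) * f x" by simp
            then show ?thesis unfolding F_def using cH
              by (simp add: sum_distrib_left[symmetric] mult.assoc)
          qed
        qed
        then show "f \<in> W" using FW by simp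
      qed
      then show ?thesis using WV V_def by blast
    qed
  qed
qed


lemma dvd_mul_cong: fixes P :: "'a::comm_ring_1"
  assumes "P dvd (a - a')" "P dvd (b - b')" shows "P dvd (a*b - a'*b')"
proof -
  have "a*b - a'*b' = a*(b-b') + (a-a')*b'" by (simp add: algebra_simps)
  then show ?thesis using assms by (simp add: dvd_add)
qed

lemma dvd_add_cong: fixes P :: "'a::comm_ring_1"
  assumes "P dvd (a - a')" "P dvd (b - b')" shows "P dvd ((a+b) - (a'+b'))"
proof -
  have "(a+b) - (a'+b') = (a-a') + (b-b')" by (simp add: algebra_simps)
  then show ?thesis using assms by (metis dvd_add)
qed

lemma econg_refl[simp]: "econg p l x x" by (simp add: econg_def)
lemma econg_sym: "econg p l x y \<Longrightarrow> econg p l y x"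
  unfolding econg_def by (metis dvd_minus_iff minus_diff_eq)
lemma econg_trans: "econg p l x y \<Longrightarrow> econg p l y z \<Longrightarrow> econg p l x z"
proof -
  have t: "P dvd (a - b) \<Longrightarrow> P dvd (b - c) \<Longrightarrow> P dvd (a - c)" for P a b c :: 'a
    by (metis diff_add_cancel add_diff_eq dvd_add diff_diff_eq2 add.commute)
  show "econg p l x y \<Longrightarrow> econg p l y z \<Longrightarrow> econg p l x z" unfolding econg_def using t by blast
qed

lemma mem_ecls: "y \<in> ecls p l x \<longleftrightarrow> econg p l x y" by (simp add: ecls_def)

lemma ecls_eq_iff: "ecls p l x = ecls p l y \<longleftrightarrow> econg p l x y"
proof
  assume "ecls p l x = ecls p l y"
  then show "econg p l x y" by (metis econg_refl mem_ecls)
next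
  assume "econg p l x y"
  then show "ecls p l x = ecls p l y" unfolding ecls_def
    by (auto intro: econg_trans econg_sym)
qed

lemma econg_eadd: "econg p l x x' \<Longrightarrow> econg p l y y' \<Longrightarrow> econg p l (eadd x y) (eadd x' y')"
  unfolding econg_def eadd_def by (simp add: dvd_add_cong)

lemma econg_emul: "econg p l x x' \<Longrightarrow> econg p l y y' \<Longrightarrow> econg p l (emul d x y) (emul d x' y')"
  unfolding econg_def emul_def by (simp add: dvd_add_cong dvd_mul_cong)

lemma econg_econj: "econg p l x x' \<Longrightarrow> econg p l (econj x) (econj x')"
  unfolding econg_def econj_def by (auto simp: dvd_diff_commute)
    (metis minus_diff_eq dvd_minus_iff)+

lemma union_const: "A \<noteq> {} \<Longrightarrow> (\<forall>x\<in>A. f x = c) \<Longrightarrow> (\<Union>x\<in>A. f x) = c" by auto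

lemma ecls_ne: "ecls p l x \<noteq> {}" using mem_ecls econg_refl by fast

lemma qadd_ecls[simp]: "qadd p l (ecls p l x) (ecls p l y) = ecls p l (eadd x y)"
  unfolding qadd_def
  by (intro union_const ecls_ne ballI) (simp add: ecls_eq_iff mem_ecls econg_eadd econg_sym)

lemma qmul_ecls[simp]: "qmul d p l (ecls p l x) (ecls p l y) = ecls p l (emul d x y)"
  unfolding qmul_def
  by (intro union_const ecls_ne ballI) (simp add: ecls_eq_iff mem_ecls econg_emul econg_sym)

lemma qconj_ecls[simp]: "qconj p l (ecls p l x) = ecls p l (econj x)"
  unfolding qconj_def
  by (intro union_const ecls_ne ballI) (simp add: ecls_eq_iff mem_ecls econg_econj econg_sym)


definition cq :: "'a::comm_ring_1 \<Rightarrow> nat \<Rightarrow> 'a ext \<Rightarrow> 'a ext \<Rightarrow> 'a ext \<Rightarrow> 'a ext \<Rightarrow> 'a mat" where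
  "cq p l a b c e = (ecls p l a, ecls p l b, ecls p l c, ecls p l e)"

lemma cq_eq_iff: "cq p l a b c e = cq p l a' b' c' e' \<longleftrightarrow>
   econg p l a a' \<and> econg p l b b' \<and> econg p l c c' \<and> econg p l e e'"
  by (simp add: cq_def ecls_eq_iff)

lemma mmul_cq[simp]: "mmul d p l (cq p l a b c e) (cq p l a' b' c' e') =
  cq p l (eadd (emul d a a') (emul d b c')) (eadd (emul d a b') (emul d b e'))
         (eadd (emul d c a') (emul d e c')) (eadd (emul d c b') (emul d e e'))"
  by (simp add: mmul_def cq_def)

lemma mone_cq: "mone p l = cq p l (1,0) (0,0) (0,0) (1,0)"
  by (simp add: mone_def cq_def qone_def qzero_def)

lemma Wmat_cq: "Wmat p l = cq p l (0,0) (1,0) (1,0) (0,0)"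
  by (simp add: Wmat_def cq_def qone_def qzero_def)

lemma ctrans_cq[simp]: "ctrans p l (cq p l a b c e) = cq p l (econj a) (econj c) (econj b) (econj e)"
  by (simp add: ctrans_def cq_def)

lemma mstar_cq[simp]: "mstar d p l (cq p l a b c e) = cq p l (econj e) (econj b) (econj c) (econj a)"
  unfolding mstar_def Wmat_cq by (simp add: eadd_def emul_def)

lemma mats_big_iff: "A \<in> mats (bigO p l) \<longleftrightarrow> (\<exists>a b c e. A = cq p l a b c e)"
proof
  assume "A \<in> mats (bigO p l)"
  then obtain x1 x2 x3 x4 where "A = (ecls p l x1, ecls p l x2, ecls p l x3, ecls p l x4)"
    unfolding mats_def bigO_def by auto
  then show "\<exists>a b c e. A = cq p l a b c e" unfolding cq_def by blast
qed (auto simp: mats_def bigO_def cq_def)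

lemma cq_big[simp]: "cq p l a b c e \<in> mats (bigO p l)"
  using mats_big_iff by blast

lemma mmul_assoc_big:
  assumes "A \<in> mats (bigO p l)" "B \<in> mats (bigO p l)" "C \<in> mats (bigO p l)"
  shows "mmul d p l (mmul d p l A B) C = mmul d p l A (mmul d p l B C)"
proof -
  obtain a b c e where A: "A = cq p l a b c e" using assms mats_big_iff by blast
  obtain a1 b1 c1 e1 where B: "B = cq p l a1 b1 c1 e1" using assms mats_big_iff by blast
  obtain a2 b2 c2 e2 where C: "C = cq p l a2 b2 c2 e2" using assms mats_big_iff by blast
  show ?thesis unfolding A B C mmul_cq
    by (simp add: eadd_def emul_def algebra_simps)
qed

lemma mmul_big: "A \<in> mats (bigO p l) \<Longrightarrow> B \<in> mats (bigO p l) \<Longrightarrow> mmul d p l A B \<in> mats (bigO p l)"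
  using mats_big_iff by (metis mmul_cq)

lemma mone_left: "A \<in> mats (bigO p l) \<Longrightarrow> mmul d p l (mone p l) A = A"
  unfolding mats_big_iff mone_cq by (auto simp: eadd_def emul_def)

lemma mone_right: "A \<in> mats (bigO p l) \<Longrightarrow> mmul d p l A (mone p l) = A"
  unfolding mats_big_iff mone_cq by (auto simp: eadd_def emul_def)

lemma mstar_mmul: "A \<in> mats (bigO p l) \<Longrightarrow> B \<in> mats (bigO p l) \<Longrightarrow>
   mstar d p l (mmul d p l A B) = mmul d p l (mstar d p l B) (mstar d p l A)"
  unfolding mats_big_iff by (auto simp: eadd_def emul_def econj_def algebra_simps)

lemma mstar_mstar: "A \<in> mats (bigO p l) \<Longrightarrow> mstar d p l (mstar d p l A) = A"
  unfolding mats_big_iff by (auto simp: econj_def)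

lemma mstar_big: "A \<in> mats (bigO p l) \<Longrightarrow> mstar d p l A \<in> mats (bigO p l)"
  by (metis mats_big_iff mstar_cq)


definition okR :: "bool \<Rightarrow> 'a::comm_ring_1 ext \<Rightarrow> bool" where
  "okR u x \<longleftrightarrow> u \<or> snd x = 0"

lemma okR_simps[simp]: "okR u (0,0)" "okR u (1,0)" "okR u (a,0)"
  by (auto simp: okR_def)

lemma okR_eadd[simp]: "okR u x \<Longrightarrow> okR u y \<Longrightarrow> okR u (eadd x y)"
  by (auto simp: okR_def eadd_def)
lemma okR_emul[simp]: "okR u x \<Longrightarrow> okR u y \<Longrightarrow> okR u (emul d x y)"
  by (auto simp: okR_def emul_def)
lemma okR_econj[simp]: "okR u x \<Longrightarrow> okR u (econj x)"
  by (auto simp: okR_def econj_def)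

lemma Rl_iff: "X \<in> Rl p l u \<longleftrightarrow> (\<exists>x. okR u x \<and> X = ecls p l x)"
proof (cases u)
  case True then show ?thesis by (auto simp: Rl_def bigO_def okR_def)
next
  case False
  show ?thesis
  proof
    assume "X \<in> Rl p l u" then show "\<exists>x. okR u x \<and> X = ecls p l x"
      using False by (auto simp: Rl_def smallo_def okR_def)
  next
    assume "\<exists>x. okR u x \<and> X = ecls p l x"
    then obtain x where "snd x = 0" "X = ecls p l x" using False okR_def by blast
    then have "X = ecls p l (fst x, 0)" by (metis prod.collapse)
    then show "X \<in> Rl p l u" using False by (auto simp: Rl_def smallo_def)
  qed
qed

lemma mats_Rl_iff: "A \<in> mats (Rl p l u) \<longleftrightarrow>
  (\<exists>a b c e. okR u a \<and> okR u b \<and> okR u c \<and> okR u e \<and> A = cq p l a b c e)"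
proof
  assume "A \<in> mats (Rl p l u)"
  then obtain X1 X2 X3 X4 where A: "A = (X1,X2,X3,X4)" "X1 \<in> Rl p l u" "X2 \<in> Rl p l u" "X3 \<in> Rl p l u" "X4 \<in> Rl p l u"
    unfolding mats_def by auto
  then show "\<exists>a b c e. okR u a \<and> okR u b \<and> okR u c \<and> okR u e \<and> A = cq p l a b c e"
    unfolding Rl_iff cq_def by blast
next
  assume "\<exists>a b c e. okR u a \<and> okR u b \<and> okR u c \<and> okR u e \<and> A = cq p l a b c e"
  then show "A \<in> mats (Rl p l u)" unfolding mats_def cq_def Rl_iff by blast
qed

lemma mats_Rl_I: "okR u a \<Longrightarrow> okR u b \<Longrightarrow> okR u c \<Longrightarrow> okR u e \<Longrightarrow> cq p l a b c e \<in> mats (Rl p l u)"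
  unfolding mats_Rl_iff by blast

lemma mats_Rl_big: "A \<in> mats (Rl p l u) \<Longrightarrow> A \<in> mats (bigO p l)"
  using mats_Rl_iff mats_big_iff by metis

lemma mmul_Rl: "A \<in> mats (Rl p l u) \<Longrightarrow> B \<in> mats (Rl p l u) \<Longrightarrow> mmul d p l A B \<in> mats (Rl p l u)"
proof -
  assume "A \<in> mats (Rl p l u)" "B \<in> mats (Rl p l u)"
  then obtain a b c e a' b' c' e' where "okR u a" "okR u b" "okR u c" "okR u e" "A = cq p l a b c e"
    "okR u a'" "okR u b'" "okR u c'" "okR u e'" "B = cq p l a' b' c' e'" unfolding mats_Rl_iff by metis
  then show ?thesis by (simp add: mats_Rl_I)
qed

lemma mone_Rl: "mone p l \<in> mats (Rl p l u)"
  unfolding mone_cq by (simp add: mats_Rl_I)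

lemma mstar_Rl: "A \<in> mats (Rl p l u) \<Longrightarrow> mstar d p l A \<in> mats (Rl p l u)"
  unfolding mats_Rl_iff by (metis okR_econj mstar_cq)

lemma Gl_mats: "A \<in> Gl d p l u \<Longrightarrow> A \<in> mats (Rl p l u)" by (simp add: Gl_def)
lemma Gl_big: "A \<in> Gl d p l u \<Longrightarrow> A \<in> mats (bigO p l)" by (rule mats_Rl_big[OF Gl_mats])

lemma mone_Gl: "mone p l \<in> Gl d p l u"
proof -
  have m: "mone p l \<in> mats (bigO p l)" by (fact mats_Rl_big[OF mone_Rl])
  have "mstar d p l (mone p l) = mone p l" unfolding mone_cq by (simp add: econj_def)
  then show ?thesis unfolding Gl_def using mone_Rl mone_left[OF m, of d] by auto
qed

lemma Gl_mmul:
  assumes A: "A \<in> Gl d p l u" and B: "B \<in> Gl d p l u"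
  shows "mmul d p l A B \<in> Gl d p l u"
proof -
  obtain A' where A': "A' \<in> mats (Rl p l u)" "mmul d p l A A' = mone p l" "mmul d p l A' A = mone p l"
    using A unfolding Gl_def by blast
  obtain B' where B': "B' \<in> mats (Rl p l u)" "mmul d p l B B' = mone p l" "mmul d p l B' B = mone p l"
    using B unfolding Gl_def by blast
  have Ab: "A \<in> mats (bigO p l)" by (fact Gl_big[OF A])
  have Bb: "B \<in> mats (bigO p l)" by (fact Gl_big[OF B])
  have A'b: "A' \<in> mats (bigO p l)" by (fact mats_Rl_big[OF A'(1)])
  have B'b: "B' \<in> mats (bigO p l)" by (fact mats_Rl_big[OF B'(1)])
  have "mmul d p l (mmul d p l A B) (mmul d p l B' A') = mmul d p l A (mmul d p l B (mmul d p l B' A'))"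
    by (rule mmul_assoc_big[OF Ab Bb mmul_big[OF B'b A'b]])
  also have "mmul d p l B (mmul d p l B' A') = A'"
    using mmul_assoc_big[OF Bb B'b A'b, of d] B'(2) mone_left[OF A'b] by simp
  finally have 1: "mmul d p l (mmul d p l A B) (mmul d p l B' A') = mone p l" using A'(2) by simp
  have "mmul d p l (mmul d p l B' A') (mmul d p l A B) = mmul d p l B' (mmul d p l A' (mmul d p l A B))"
    by (rule mmul_assoc_big[OF B'b A'b mmul_big[OF Ab Bb]])
  also have "mmul d p l A' (mmul d p l A B) = B"
    using mmul_assoc_big[OF A'b Ab Bb, of d] A'(3) mone_left[OF Bb] by simp
  finally have 2: "mmul d p l (mmul d p l B' A') (mmul d p l A B) = mone p l" using B'(3) by simp
  have 3: "mmul d p l (mstar d p l (mmul d p l A B)) (mmul d p l A B) = mone p l" if u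
  proof -
    have sA: "mmul d p l (mstar d p l A) A = mone p l" and sB: "mmul d p l (mstar d p l B) B = mone p l"
      using A B that unfolding Gl_def by auto
    have sAb: "mstar d p l A \<in> mats (bigO p l)" by (rule mstar_big[OF Ab])
    have sBb: "mstar d p l B \<in> mats (bigO p l)" by (rule mstar_big[OF Bb])
    have "mmul d p l (mstar d p l (mmul d p l A B)) (mmul d p l A B)
       = mmul d p l (mmul d p l (mstar d p l B) (mstar d p l A)) (mmul d p l A B)"
      using mstar_mmul[OF Ab Bb] by simp
    also have "\<dots> = mmul d p l (mstar d p l B) (mmul d p l (mstar d p l A) (mmul d p l A B))"
      by (rule mmul_assoc_big[OF sBb sAb mmul_big[OF Ab Bb]])
    also have "mmul d p l (mstar d p l A) (mmul d p l A B) = B"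
      using mmul_assoc_big[OF sAb Ab Bb, of d, symmetric] sA mone_left[OF Bb] by simp
    finally show ?thesis using sB by simp
  qed
  have 4: "mmul d p l B' A' \<in> mats (Rl p l u)" by (rule mmul_Rl[OF B'(1) A'(1)])
  have 5: "mmul d p l A B \<in> mats (Rl p l u)" by (rule mmul_Rl[OF Gl_mats[OF A] Gl_mats[OF B]])
  show ?thesis unfolding Gl_def using 1 2 3 4 5 by blast
qed

lemma Gl_inv:
  assumes A: "A \<in> Gl d p l u"
  shows "\<exists>B\<in>Gl d p l u. mmul d p l A B = mone p l \<and> mmul d p l B A = mone p l"
proof -
  obtain B where B: "B \<in> mats (Rl p l u)" "mmul d p l A B = mone p l" "mmul d p l B A = mone p l"
    using A unfolding Gl_def by blast
  have Ab: "A \<in> mats (bigO p l)" by (fact Gl_big[OF A])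
  have Bb: "B \<in> mats (bigO p l)" by (fact mats_Rl_big[OF B(1)])
  have "mmul d p l (mstar d p l B) B = mone p l" if u
  proof -
    have sA: "mmul d p l (mstar d p l A) A = mone p l" using A that unfolding Gl_def by auto
    have sAb: "mstar d p l A \<in> mats (bigO p l)" by (rule mstar_big[OF Ab])
    have "mstar d p l A = mmul d p l (mstar d p l A) (mmul d p l A B)"
      using B(2) mone_right[OF sAb] by simp
    also have "\<dots> = mmul d p l (mmul d p l (mstar d p l A) A) B"
      by (rule mmul_assoc_big[OF sAb Ab Bb, symmetric])
    also have "\<dots> = B" using sA mone_left[OF Bb] by simp
    finally have "mstar d p l B = A" using mstar_mstar[OF Ab] by metis
    then show ?thesis using B by simp
  qed
  then have "B \<in> Gl d p l u" unfolding Gl_def using B Gl_mats[OF A] by blast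
  then show ?thesis using B by blast
qed


lemma ext_simps[simp]:
  "emul d (0,0) x = (0,0)" "emul d x (0,0) = (0,0)" "eadd (0,0) x = x" "eadd x (0,0) = x"
  "emul d (1,0) x = x" "emul d x (1,0) = x" "econj (0,0) = (0,0)" "econj (1,0) = (1,0)"
  by (auto simp: emul_def eadd_def econj_def)

lemma qzero_cls: "qzero p l = ecls p l (0,0)" by (simp add: qzero_def)

lemma Bor_rep: assumes "A \<in> Bor d p l u"
  shows "\<exists>a b e. okR u a \<and> okR u b \<and> okR u e \<and> A = cq p l a b (0,0) e"
proof -
  have "A \<in> mats (Rl p l u)" using assms by (simp add: Bor_def Gl_def)
  then obtain a b c e where r: "okR u a" "okR u b" "okR u c" "okR u e" "A = cq p l a b c e"
    unfolding mats_Rl_iff by metis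
  have "ecls p l c = qzero p l" using assms r(5) by (simp add: Bor_def cq_def)
  then have "cq p l a b c e = cq p l a b (0,0) e" by (simp add: cq_def qzero_def)
  then show ?thesis using r by metis
qed

lemma Bor_I: "A \<in> Gl d p l u \<Longrightarrow> A = cq p l a b (0,0) e \<Longrightarrow> A \<in> Bor d p l u"
  by (simp add: Bor_def cq_def qzero_def)

lemma Bor_Gl: "A \<in> Bor d p l u \<Longrightarrow> A \<in> Gl d p l u" by (simp add: Bor_def)
lemma Bor_big: "A \<in> Bor d p l u \<Longrightarrow> A \<in> mats (bigO p l)" by (rule Gl_big[OF Bor_Gl])

lemma Bor_mmul: assumes A: "A \<in> Bor d p l u" and B: "B \<in> Bor d p l u"
  shows "mmul d p l A B \<in> Bor d p l u"
proof -
  obtain a b e where a: "A = cq p l a b (0,0) e" using Bor_rep[OF A] by metis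
  obtain a' b' e' where b: "B = cq p l a' b' (0,0) e'" using Bor_rep[OF B] by metis
  show ?thesis
    by (rule Bor_I[OF Gl_mmul[OF Bor_Gl[OF A] Bor_Gl[OF B]]]) (simp add: a b)
qed

lemma mone_Bor: "mone p l \<in> Bor d p l u"
  by (rule Bor_I[OF mone_Gl]) (simp add: mone_cq)

lemma Bor_inv: assumes A: "A \<in> Bor d p l u"
  shows "\<exists>B\<in>Bor d p l u. mmul d p l A B = mone p l \<and> mmul d p l B A = mone p l"
proof -
  obtain B where B: "B \<in> Gl d p l u" "mmul d p l A B = mone p l" "mmul d p l B A = mone p l"
    using Gl_inv[OF Bor_Gl[OF A]] by blast
  obtain a b e where a: "A = cq p l a b (0,0) e" using Bor_rep[OF A] by metis
  obtain a' b' c' e' where b: "B = cq p l a' b' c' e'"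
    using Gl_big[OF B(1)] mats_big_iff by metis
  have h: "econg p l (emul d a' a) (1,0)" "econg p l (emul d c' a) (0,0)"
    using B(3) unfolding a b mone_cq by (simp_all add: cq_eq_iff)
  have "econg p l c' (emul d c' (emul d a' a))"
    using econg_emul[OF econg_refl[of p l c'] econg_sym[OF h(1)], of d] by simp
  moreover have "emul d c' (emul d a' a) = emul d (emul d c' a) a'"
    by (simp add: emul_def algebra_simps)
  moreover have "econg p l (emul d (emul d c' a) a') (0,0)"
    using econg_emul[OF h(2) econg_refl[of p l a'], of d] by simp
  ultimately have "econg p l c' (0,0)" using econg_trans by metis
  then have "B = cq p l a' b' (0,0) e'" using b by (simp add: cq_eq_iff)
  then have "B \<in> Bor d p l u" using Bor_I[OF B(1)] by blast
  then show ?thesis using B by blast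
qed

lemma Bor_units: assumes A: "A \<in> Bor d p l u" "A = cq p l a b (0,0) e"
  shows "\<exists>a' e'. okR u a' \<and> okR u e' \<and> econg p l (emul d a a') (1,0) \<and> econg p l (emul d e e') (1,0)"
proof -
  obtain B where B: "B \<in> Bor d p l u" "mmul d p l A B = mone p l" "mmul d p l B A = mone p l"
    using Bor_inv[OF A(1)] by blast
  obtain a' b' e' where b: "okR u a'" "okR u b'" "okR u e'" "B = cq p l a' b' (0,0) e'"
    using Bor_rep[OF B(1)] by metis
  have "econg p l (emul d a a') (1,0)" "econg p l (emul d e e') (1,0)"
    using B(2) unfolding A(2) b(4) mone_cq by (simp_all add: cq_eq_iff)
  then show ?thesis using b by blast
qed

lemma Bor_unitary: assumes A: "A \<in> Bor d p l u" "A = cq p l a b (0,0) e" and u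
  shows "econg p l (emul d (econj e) a) (1,0) \<and> econg p l (eadd (emul d (econj e) b) (emul d (econj b) e)) (0,0)"
proof -
  have "mmul d p l (mstar d p l A) A = mone p l" using A(1) \<open>u\<close> by (simp add: Bor_def Gl_def)
  then show ?thesis unfolding A(2) mone_cq by (simp add: cq_eq_iff)
qed


definition eneg :: "'a::comm_ring_1 ext \<Rightarrow> 'a ext" where "eneg x = (- fst x, - snd x)"
definition tau :: "'a::comm_ring_1 \<Rightarrow> 'a \<Rightarrow> bool \<Rightarrow> nat \<Rightarrow> 'a ext" where
  "tau d p u i = emul d (epsi u) (p^i, 0)"
definition ginv :: "'a::comm_ring_1 \<Rightarrow> 'a \<Rightarrow> nat \<Rightarrow> bool \<Rightarrow> nat \<Rightarrow> 'a mat" where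
  "ginv d p l u i = cq p l (1,0) (0,0) (eneg (tau d p u i)) (1,0)"

lemma eadd_eneg[simp]: "eadd x (eneg x) = (0,0)" "eadd (eneg x) x = (0,0)"
  by (auto simp: eadd_def eneg_def)

lemma okR_eneg[simp]: "okR u x \<Longrightarrow> okR u (eneg x)" by (auto simp: okR_def eneg_def)

lemma tau_False: "tau d p False i = (p^i, 0)" by (simp add: tau_def epsi_def)
lemma tau_True: "tau d p True i = (0, p^i)" by (simp add: tau_def epsi_def emul_def)

lemma okR_tau[simp]: "okR u (tau d p u i)"
  by (cases u) (auto simp: tau_False tau_True okR_def)

lemma econj_tau: "u \<Longrightarrow> econj (tau d p u i) = eneg (tau d p u i)"
  by (simp add: tau_True econj_def eneg_def)

lemma gmat_cq: "gmat d p l u i = cq p l (1,0) (0,0) (tau d p u i) (1,0)"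
  by (simp add: gmat_def cq_def qone_def qzero_def tau_def)

lemma g_ginv: "mmul d p l (gmat d p l u i) (ginv d p l u i) = mone p l"
  "mmul d p l (ginv d p l u i) (gmat d p l u i) = mone p l"
  by (simp_all add: gmat_cq ginv_def mone_cq)

lemma g_mats: "gmat d p l u i \<in> mats (Rl p l u)" "ginv d p l u i \<in> mats (Rl p l u)"
  by (simp_all add: gmat_cq ginv_def mats_Rl_I)

lemma g_Gl: "gmat d p l u i \<in> Gl d p l u" "ginv d p l u i \<in> Gl d p l u"
proof -
  have s1: "mmul d p l (mstar d p l (gmat d p l u i)) (gmat d p l u i) = mone p l" if u
    using that by (simp add: gmat_cq mone_cq econj_tau)
  have s2: "mmul d p l (mstar d p l (ginv d p l u i)) (ginv d p l u i) = mone p l" if u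
  proof -
    have "econj (eneg (tau d p u i)) = tau d p u i" using that by (simp add: tau_True econj_def eneg_def)
    then show ?thesis by (simp add: ginv_def mone_cq)
  qed
  show "gmat d p l u i \<in> Gl d p l u" unfolding Gl_def using g_mats[of d p l u i] g_ginv[of d p l u i] s1 by blast
  show "ginv d p l u i \<in> Gl d p l u" unfolding Gl_def using g_mats[of d p l u i] g_ginv[of d p l u i] s2 by blast
qed

lemma minv_g: "minv d p l (Rl p l u) (gmat d p l u i) = ginv d p l u i"
  unfolding minv_def
proof (rule the_equality)
  show "ginv d p l u i \<in> mats (Rl p l u) \<and> mmul d p l (gmat d p l u i) (ginv d p l u i) = mone p l \<and>
    mmul d p l (ginv d p l u i) (gmat d p l u i) = mone p l" using g_mats[of d p l u i] g_ginv[of d p l u i] by blast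
next
  fix B assume B: "B \<in> mats (Rl p l u) \<and> mmul d p l (gmat d p l u i) B = mone p l \<and> mmul d p l B (gmat d p l u i) = mone p l"
  have Bb: "B \<in> mats (bigO p l)" using B mats_Rl_big by blast
  have gb: "gmat d p l u i \<in> mats (bigO p l)" "ginv d p l u i \<in> mats (bigO p l)"
    using g_mats mats_Rl_big by blast+
  have "B = mmul d p l B (mmul d p l (gmat d p l u i) (ginv d p l u i))"
    using g_ginv(1)[of d p l u i] mone_right[OF Bb, of d] by simp
  also have "\<dots> = mmul d p l (mmul d p l B (gmat d p l u i)) (ginv d p l u i)"
    by (rule mmul_assoc_big[OF Bb gb, symmetric])
  also have "\<dots> = ginv d p l u i" using B mone_left[OF gb(2)] by simp
  finally show "B = ginv d p l u i" .
qed

lemma conj_id1: "y \<in> mats (bigO p l) \<Longrightarrow>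
  mmul d p l (ginv d p l u i) (mmul d p l (mmul d p l (gmat d p l u i) (mmul d p l y (ginv d p l u i))) (gmat d p l u i)) = y"
  unfolding mats_big_iff
  by (auto simp: gmat_cq ginv_def eadd_def emul_def eneg_def algebra_simps)

lemma conj_id2: "y \<in> mats (bigO p l) \<Longrightarrow>
  mmul d p l (gmat d p l u i) (mmul d p l (mmul d p l (ginv d p l u i) (mmul d p l y (gmat d p l u i))) (ginv d p l u i)) = y"
  unfolding mats_big_iff
  by (auto simp: gmat_cq ginv_def eadd_def emul_def eneg_def algebra_simps)

lemma Bsub_iff: "x \<in> Bsub d p l u i \<longleftrightarrow> x \<in> Bor d p l u \<and>
   mmul d p l (ginv d p l u i) (mmul d p l x (gmat d p l u i)) \<in> Bor d p l u"
proof
  assume "x \<in> Bsub d p l u i"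
  then obtain y where x: "x \<in> Bor d p l u" "y \<in> Bor d p l u"
    "x = mmul d p l (gmat d p l u i) (mmul d p l y (ginv d p l u i))"
    unfolding Bsub_def minv_g by blast
  then show "x \<in> Bor d p l u \<and> mmul d p l (ginv d p l u i) (mmul d p l x (gmat d p l u i)) \<in> Bor d p l u"
    using conj_id1[OF Bor_big[OF x(2)]] by simp
next
  assume a: "x \<in> Bor d p l u \<and> mmul d p l (ginv d p l u i) (mmul d p l x (gmat d p l u i)) \<in> Bor d p l u"
  have "x = mmul d p l (gmat d p l u i) (mmul d p l (mmul d p l (ginv d p l u i) (mmul d p l x (gmat d p l u i))) (ginv d p l u i))"
    using conj_id2[OF Bor_big[OF a[THEN conjunct1]], of d u i] by simp
  then show "x \<in> Bsub d p l u i"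
    unfolding Bsub_def minv_g using a by blast
qed

lemma econg_eneg0: "econg p l (eneg x) (0,0) \<longleftrightarrow> econg p l x (0,0)"
  by (simp add: econg_def eneg_def)

lemma Bsub_iff2: assumes x: "x \<in> Bor d p l u" "x = cq p l a b (0,0) e"
  shows "x \<in> Bsub d p l u i \<longleftrightarrow>
    econg p l (emul d (tau d p u i) (eadd (eadd a (eneg e)) (emul d (tau d p u i) b))) (0,0)"
proof -
  let ?t = "tau d p u i"
  let ?L = "emul d ?t (eadd (eadd a (eneg e)) (emul d ?t b))"
  have eq: "mmul d p l (ginv d p l u i) (mmul d p l x (gmat d p l u i)) =
     cq p l (eadd a (emul d b ?t)) b (eneg ?L) (eadd e (eneg (emul d ?t b)))"
    unfolding x(2) by (simp add: gmat_cq ginv_def cq_eq_iff eadd_def emul_def eneg_def algebra_simps)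
  have Gl: "mmul d p l (ginv d p l u i) (mmul d p l x (gmat d p l u i)) \<in> Gl d p l u"
    using Gl_mmul g_Gl Bor_Gl[OF x(1)] by metis
  show ?thesis
  proof
    assume "x \<in> Bsub d p l u i"
    then have "mmul d p l (ginv d p l u i) (mmul d p l x (gmat d p l u i)) \<in> Bor d p l u"
      using Bsub_iff by blast
    then have "ecls p l (eneg ?L) = qzero p l" unfolding eq by (simp add: Bor_def cq_def)
    then show "econg p l ?L (0,0)" by (simp add: qzero_cls ecls_eq_iff econg_eneg0)
  next
    assume "econg p l ?L (0,0)"
    then have "mmul d p l (ginv d p l u i) (mmul d p l x (gmat d p l u i)) =
      cq p l (eadd a (emul d b ?t)) b (0,0) (eadd e (eneg (emul d ?t b)))"
      unfolding eq by (simp add: cq_eq_iff econg_eneg0)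
    then show "x \<in> Bsub d p l u i" using Bor_I[OF Gl] Bsub_iff x(1) by blast
  qed
qed

lemma cq_sel: "fst (cq p l a b c e) = ecls p l a" "snd (snd (snd (cq p l a b c e))) = ecls p l e"
  "fst (snd (snd (cq p l a b c e))) = ecls p l c"
  by (simp_all add: cq_def)

lemma theta_formula: assumes x: "x = cq p l a b (0,0) e"
  shows "pchar \<chi>1 \<chi>2 x * pchar \<chi>3 \<chi>4 (mmul d p l (minv d p l (Rl p l u) (gmat d p l u i)) (mmul d p l x (gmat d p l u i)))
    = \<chi>1 (ecls p l a) * \<chi>2 (ecls p l e) * (\<chi>3 (ecls p l (eadd a (emul d (tau d p u i) b))) *
       \<chi>4 (ecls p l (eadd e (eneg (emul d (tau d p u i) b)))))"
proof -
  have "eadd a (emul d b (tau d p u i)) = eadd a (emul d (tau d p u i) b)"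
    by (simp add: eadd_def emul_def algebra_simps)
  moreover have "eadd (emul d (eneg (tau d p u i)) b) e = eadd e (eneg (emul d (tau d p u i) b))"
    by (simp add: eadd_def emul_def eneg_def algebra_simps)
  ultimately show ?thesis unfolding x minv_g
    by (simp add: gmat_cq ginv_def pchar_def cq_sel)
qed


lemma qunits_I: "okR u x \<Longrightarrow> okR u y \<Longrightarrow> econg p l (emul d x y) (1,0) \<Longrightarrow> ecls p l x \<in> qunits d p l (Rl p l u)"
proof -
  assume a: "okR u x" "okR u y" "econg p l (emul d x y) (1,0)"
  have "ecls p l x \<in> Rl p l u" "ecls p l y \<in> Rl p l u" using a Rl_iff by blast+
  moreover have "qmul d p l (ecls p l x) (ecls p l y) = qone p l"
    using a(3) by (simp add: qone_def ecls_eq_iff)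
  ultimately show ?thesis unfolding qunits_def by blast
qed

lemma Bor_diag: assumes "x \<in> Bor d p l u"
  shows "fst x \<in> qunits d p l (Rl p l u) \<and> snd (snd (snd x)) \<in> qunits d p l (Rl p l u)"
proof -
  obtain a b e where r: "okR u a" "okR u b" "okR u e" "x = cq p l a b (0,0) e" using Bor_rep[OF assms] by metis
  obtain a' e' where q: "okR u a'" "okR u e'" "econg p l (emul d a a') (1,0)" "econg p l (emul d e e') (1,0)"
    using Bor_units[OF assms r(4)] by blast
  show ?thesis using qunits_I[OF r(1) q(1) q(3)] qunits_I[OF r(3) q(2) q(4)] r(4) by (simp add: cq_sel)
qed

lemma Bor_diag_mult: assumes "x \<in> Bor d p l u" "y \<in> Bor d p l u"
  shows "fst (mmul d p l x y) = qmul d p l (fst x) (fst y) \<and>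
    snd (snd (snd (mmul d p l x y))) = qmul d p l (snd (snd (snd x))) (snd (snd (snd y)))"
proof -
  obtain a b e where x: "x = cq p l a b (0,0) e" using Bor_rep[OF assms(1)] by metis
  obtain a' b' e' where y: "y = cq p l a' b' (0,0) e'" using Bor_rep[OF assms(2)] by metis
  show ?thesis unfolding x y by (simp add: cq_sel)
qed

lemma pchar_mult: assumes "x \<in> Bor d p l u" "y \<in> Bor d p l u"
  and c: "is_char d p l (Rl p l u) \<chi>" "is_char d p l (Rl p l u) \<chi>'"
  shows "pchar \<chi> \<chi>' (mmul d p l x y) = pchar \<chi> \<chi>' x * pchar \<chi> \<chi>' y"
  using Bor_diag[OF assms(1)] Bor_diag[OF assms(2)] Bor_diag_mult[OF assms(1,2)] c
  unfolding pchar_def is_char_def by simp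

lemma pchar_nz: assumes "x \<in> Bor d p l u"
  and c: "is_char d p l (Rl p l u) \<chi>" "is_char d p l (Rl p l u) \<chi>'"
  shows "pchar \<chi> \<chi>' x \<noteq> 0"
  using Bor_diag[OF assms(1)] c unfolding pchar_def is_char_def by simp

lemma conj_mult: "x \<in> mats (bigO p l) \<Longrightarrow> y \<in> mats (bigO p l) \<Longrightarrow>
  mmul d p l (ginv d p l u i) (mmul d p l (mmul d p l x y) (gmat d p l u i)) =
  mmul d p l (mmul d p l (ginv d p l u i) (mmul d p l x (gmat d p l u i))) (mmul d p l (ginv d p l u i) (mmul d p l y (gmat d p l u i)))"
proof -
  assume "x \<in> mats (bigO p l)" "y \<in> mats (bigO p l)"
  then obtain a b c e a' b' c' e' where x: "x = cq p l a b c e" and y: "y = cq p l a' b' c' e'"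
    unfolding mats_big_iff by blast
  show ?thesis unfolding x y by (simp add: gmat_cq ginv_def cq_eq_iff) (simp add: eadd_def emul_def eneg_def algebra_simps)
qed

lemma mone_Bsub: "mone p l \<in> Bsub d p l u i"
proof -
  have "mmul d p l (ginv d p l u i) (mmul d p l (mone p l) (gmat d p l u i)) = mone p l"
    by (simp add: mone_cq gmat_cq ginv_def)
  then show ?thesis using Bsub_iff[of "mone p l" d p l u i] mone_Bor by simp
qed

lemma Bsub_Bor: "x \<in> Bsub d p l u i \<Longrightarrow> x \<in> Bor d p l u" by (simp add: Bsub_def)

lemma Bsub_mmul: assumes "x \<in> Bsub d p l u i" "y \<in> Bsub d p l u i"
  shows "mmul d p l x y \<in> Bsub d p l u i"
proof -
  have x: "x \<in> Bor d p l u" "mmul d p l (ginv d p l u i) (mmul d p l x (gmat d p l u i)) \<in> Bor d p l u"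
    using assms(1) Bsub_iff by blast+
  have y: "y \<in> Bor d p l u" "mmul d p l (ginv d p l u i) (mmul d p l y (gmat d p l u i)) \<in> Bor d p l u"
    using assms(2) Bsub_iff by blast+
  show ?thesis unfolding Bsub_iff conj_mult[OF Bor_big[OF x(1)] Bor_big[OF y(1)]]
    using Bor_mmul x y by blast
qed

lemma theta_hom: assumes "x \<in> Bsub d p l u i" "y \<in> Bsub d p l u i"
  and c: "is_char d p l (Rl p l u) \<chi>1" "is_char d p l (Rl p l u) \<chi>2"
    "is_char d p l (Rl p l u) \<chi>3" "is_char d p l (Rl p l u) \<chi>4"
  shows "pchar \<chi>1 \<chi>2 (mmul d p l x y) * pchar \<chi>3 \<chi>4 (mmul d p l (minv d p l (Rl p l u) (gmat d p l u i))
                                       (mmul d p l (mmul d p l x y) (gmat d p l u i)))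
   = (pchar \<chi>1 \<chi>2 x * pchar \<chi>3 \<chi>4 (mmul d p l (minv d p l (Rl p l u) (gmat d p l u i))
                                       (mmul d p l x (gmat d p l u i)))) *
     (pchar \<chi>1 \<chi>2 y * pchar \<chi>3 \<chi>4 (mmul d p l (minv d p l (Rl p l u) (gmat d p l u i))
                                       (mmul d p l y (gmat d p l u i))))"
proof -
  have x: "x \<in> Bor d p l u" "mmul d p l (ginv d p l u i) (mmul d p l x (gmat d p l u i)) \<in> Bor d p l u"
    using assms(1) Bsub_iff by blast+
  have y: "y \<in> Bor d p l u" "mmul d p l (ginv d p l u i) (mmul d p l y (gmat d p l u i)) \<in> Bor d p l u"
    using assms(2) Bsub_iff by blast+
  show ?thesis unfolding minv_g conj_mult[OF Bor_big[OF x(1)] Bor_big[OF y(1)]]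
    using pchar_mult[OF x(1) y(1) c(1,2)] pchar_mult[OF x(2) y(2) c(3,4)] by simp
qed

lemma theta_nz: assumes "x \<in> Bsub d p l u i"
  and c: "is_char d p l (Rl p l u) \<chi>1" "is_char d p l (Rl p l u) \<chi>2"
    "is_char d p l (Rl p l u) \<chi>3" "is_char d p l (Rl p l u) \<chi>4"
  shows "pchar \<chi>1 \<chi>2 x * pchar \<chi>3 \<chi>4 (mmul d p l (minv d p l (Rl p l u) (gmat d p l u i))
                                       (mmul d p l x (gmat d p l u i))) \<noteq> 0"
proof -
  have x: "x \<in> Bor d p l u" "mmul d p l (ginv d p l u i) (mmul d p l x (gmat d p l u i)) \<in> Bor d p l u"
    using assms(1) Bsub_iff by blast+
  show ?thesis unfolding minv_g using pchar_nz[OF x(1) c(1,2)] pchar_nz[OF x(2) c(3,4)] by simp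
qed


lemma dvr_not_unit: "dvr_unif p \<Longrightarrow> \<not> p dvd 1" by (simp add: dvr_unif_def)

lemma dvr_unit: assumes "dvr_unif p" "\<not> p dvd x" shows "\<exists>y. x * y = 1"
proof -
  have "x \<noteq> 0" using assms(2) by auto
  then obtain w n where w: "w dvd 1" "x = w * p ^ n" using assms(1) unfolding dvr_unif_def by blast
  have "n = 0"
  proof (rule ccontr)
    assume "n \<noteq> 0" then have "p dvd p ^ n" by simp
    then show False using assms(2) w(2) by simp
  qed
  then have "x = w" using w by simp
  moreover obtain k where "1 = w * k" using w(1) by (rule dvdE)
  ultimately have "x * k = 1" by simp
  then show ?thesis by blast
qed

lemma dvr_val: assumes "dvr_unif p" "x \<noteq> 0" shows "\<exists>v v' m. v * v' = 1 \<and> x = v * p ^ m"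
proof -
  obtain w n where w: "w dvd 1" "x = w * p ^ n" using assms unfolding dvr_unif_def by blast
  obtain k where "1 = w * k" using w(1) by (rule dvdE)
  then show ?thesis using w(2) by metis
qed

lemma unit_mod: assumes "dvr_unif p" "1 \<le> l" "p ^ l dvd (x * y - 1)" shows "\<exists>z. x * z = 1"
proof (rule dvr_unit[OF assms(1)])
  show "\<not> p dvd x"
  proof
    assume "p dvd x"
    moreover have "p dvd p ^ l" using assms(2) by (simp add: dvd_power)
    have a: "p dvd x * y" using \<open>p dvd x\<close> by (rule dvd_mult2)
    have b: "p dvd (x * y - 1)" using dvd_trans[OF \<open>p dvd p ^ l\<close> assms(3)] .
    have "p dvd (x * y) - (x * y - 1)" using a b by (rule dvd_diff)
    then show False using dvr_not_unit[OF assms(1)] by simp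
  qed
qed

lemma pow_lt: assumes "dvr_unif p" "\<not> p ^ l dvd (p ^ n * w)" shows "n < l"
proof (rule ccontr)
  assume "\<not> n < l" then have "p ^ l dvd p ^ n" by (simp add: le_imp_power_dvd)
  then show False using assms(2) by (simp add: dvd_mult2)
qed

lemma fin_reps: assumes "finite (residue_field p)"
  shows "\<exists>S. finite S \<and> (\<forall>x. \<exists>r\<in>S. p ^ n dvd (x - r))"
proof (induction n)
  case 0 then show ?case by (rule exI[of _ "{0}"]) simp
next
  case (Suc n)
  obtain S where S: "finite S" "\<forall>x. \<exists>r\<in>S. p ^ n dvd (x - r)" using Suc by blast
  define rep where "rep C = (SOME r. C = {y. p dvd (r - y)})" for C
  define S1 where "S1 = rep ` residue_field p"
  have S1f: "finite S1" using assms S1_def by simp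
  have S1: "\<exists>s\<in>S1. p dvd (x - s)" for x
  proof -
    let ?C = "{y. p dvd (x - y)}"
    have C: "?C \<in> residue_field p" by (simp add: residue_field_def)
    have ex: "\<exists>r. ?C = {y. p dvd (r - y)}" by blast
    define r0 where "r0 = rep ?C"
    have eq: "?C = {y. p dvd (r0 - y)}" unfolding r0_def rep_def using ex by (rule someI_ex)
    have "p dvd (x - x)" by simp
    then have "x \<in> ?C" by (simp only: mem_Collect_eq)
    then have "x \<in> {y. p dvd (r0 - y)}" by (simp only: eq)
    then have "p dvd (x - r0)" by (metis mem_Collect_eq dvd_minus_iff minus_diff_eq)
    moreover have "r0 \<in> S1" unfolding S1_def r0_def using C by (rule imageI)
    ultimately show ?thesis by blast
  qed
  define S2 where "S2 = (\<lambda>(r,s). r + p ^ n * s) ` (S \<times> S1)"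
  have "finite S2" unfolding S2_def using S(1) S1f by (intro finite_imageI finite_cartesian_product)
  moreover have "\<exists>r\<in>S2. p ^ Suc n dvd (x - r)" for x
  proof -
    obtain r where r: "r \<in> S" "p ^ n dvd (x - r)" using S by blast
    then obtain q where q: "x - r = p ^ n * q" using dvdE by metis
    obtain s where s: "s \<in> S1" "p dvd (q - s)" using S1 by blast
    then obtain t where t: "q - s = p * t" using dvdE by metis
    have "x - (r + p ^ n * s) = p ^ Suc n * t"
    proof -
      have "x - (r + p ^ n * s) = (x - r) - p ^ n * s" by (simp add: algebra_simps)
      also have "\<dots> = p ^ n * q - p ^ n * s" using q by simp
      also have "\<dots> = p ^ n * (q - s)" by (simp add: right_diff_distrib)
      finally have "x - (r + p ^ n * s) = p ^ n * (q - s)" .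
      then show ?thesis using t by simp
    qed
    moreover have "r + p ^ n * s \<in> S2" unfolding S2_def
      by (rule image_eqI[where x="(r,s)"]) (simp_all add: r s)
    ultimately show ?thesis by (metis dvd_triv_left)
  qed
  ultimately show ?case by (intro exI[of _ S2]) blast
qed

lemma finite_classes: assumes "finite (residue_field p)"
  shows "finite (range (\<lambda>x. {y. p ^ n dvd (x - y)}))"
proof -
  obtain S where S: "finite S" "\<forall>x. \<exists>r\<in>S. p ^ n dvd (x - r)" using fin_reps[OF assms] by blast
  have "range (\<lambda>x. {y. p ^ n dvd (x - y)}) \<subseteq> (\<lambda>x. {y. p ^ n dvd (x - y)}) ` S"
  proof
    fix C assume "C \<in> range (\<lambda>x. {y. p ^ n dvd (x - y)})"
    then obtain x where C: "C = {y. p ^ n dvd (x - y)}" by blast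
    obtain r where r: "r \<in> S" "p ^ n dvd (x - r)" using S by blast
    have "C = {y. p ^ n dvd (r - y)}" unfolding C
    proof (intro Collect_cong iffI)
      fix y assume "p ^ n dvd (x - y)"
      then have "p ^ n dvd ((x - y) - (x - r))" using r(2) by (rule dvd_diff)
      then show "p ^ n dvd (r - y)" by simp
    next
      fix y assume "p ^ n dvd (r - y)"
      then have "p ^ n dvd ((x - r) + (r - y))" using r(2) dvd_add by blast
      then show "p ^ n dvd (x - y)" by simp
    qed
    then show "C \<in> (\<lambda>x. {y. p ^ n dvd (x - y)}) ` S" using r by blast
  qed
  then show ?thesis using S finite_subset by blast
qed

lemma ecls_times: "ecls p l x = {y. p ^ l dvd (fst x - y)} \<times> {y. p ^ l dvd (snd x - y)}"
  by (rule set_eqI) (simp add: ecls_def econg_def mem_Times_iff)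

lemma finite_bigO: assumes "finite (residue_field p)" shows "finite (bigO p l)"
proof -
  let ?A = "\<lambda>a. {y. p ^ l dvd (a - y)}"
  let ?K = "range ?A"
  let ?f = "\<lambda>z. fst z \<times> snd z"
  have "bigO p l \<subseteq> ?f ` (?K \<times> ?K)"
  proof
    fix C assume "C \<in> bigO p l"
    then obtain x where C: "C = ecls p l x" unfolding bigO_def by blast
    have "C = ?f (?A (fst x), ?A (snd x))" unfolding C ecls_times by simp
    moreover have "(?A (fst x), ?A (snd x)) \<in> ?K \<times> ?K" by (intro SigmaI rangeI)
    ultimately show "C \<in> ?f ` (?K \<times> ?K)" by (rule image_eqI)
  qed
  moreover have "finite (?f ` (?K \<times> ?K))" using finite_classes[OF assms, of l] by simp
  ultimately show ?thesis by (rule finite_subset)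
qed

lemma finite_Bor: assumes "finite (residue_field p)" shows "finite (Bor d p l u)"
proof -
  have "Bor d p l u \<subseteq> mats (bigO p l)" by (rule subsetI, rule Bor_big)
  moreover have "mats (bigO p l) = bigO p l \<times> bigO p l \<times> bigO p l \<times> bigO p l"
    unfolding mats_def by auto
  moreover have "finite (bigO p l \<times> bigO p l \<times> bigO p l \<times> bigO p l)"
    using finite_bigO[OF assms] by simp
  ultimately show ?thesis using finite_subset by metis
qed


definition thet where
  "thet \<chi>1 \<chi>2 \<chi>3 \<chi>4 d p l u i x = pchar \<chi>1 \<chi>2 x *
     pchar \<chi>3 \<chi>4 (mmul d p l (minv d p l (Rl p l u) (gmat d p l u i)) (mmul d p l x (gmat d p l u i)))"

lemma thet_cq: "thet \<chi>1 \<chi>2 \<chi>3 \<chi>4 d p l u i (cq p l a b (0,0) e) =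
  \<chi>1 (ecls p l a) * \<chi>2 (ecls p l e) * (\<chi>3 (ecls p l (eadd a (emul d (tau d p u i) b))) *
       \<chi>4 (ecls p l (eadd e (eneg (emul d (tau d p u i) b)))))"
  unfolding thet_def by (rule theta_formula) simp

lemma char_one: assumes "is_char d p l (Rl p l u) \<chi>" shows "\<chi> (ecls p l (1,0)) = 1"
proof -
  have q: "ecls p l (1,0) \<in> qunits d p l (Rl p l u)" by (rule qunits_I[of u _ "(1,0)"]) simp_all
  have "\<chi> (ecls p l (1,0)) = \<chi> (ecls p l (1,0)) * \<chi> (ecls p l (1,0))"
    using assms q unfolding is_char_def by (metis qmul_ecls ext_simps(5))
  moreover have "\<chi> (ecls p l (1,0)) \<noteq> 0" using assms q unfolding is_char_def by blast
  ultimately show ?thesis by (metis mult_cancel_left2)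
qed

lemma char_mul: assumes "is_char d p l (Rl p l u) \<chi>" "ecls p l x \<in> qunits d p l (Rl p l u)" "ecls p l y \<in> qunits d p l (Rl p l u)"
  shows "\<chi> (ecls p l (emul d x y)) = \<chi> (ecls p l x) * \<chi> (ecls p l y)"
  using assms unfolding is_char_def by (metis qmul_ecls)

lemma char_nz: assumes "is_char d p l (Rl p l u) \<chi>" "ecls p l x \<in> qunits d p l (Rl p l u)"
  shows "\<chi> (ecls p l x) \<noteq> 0"
  using assms unfolding is_char_def by blast

lemma final_ne:
  assumes c3: "is_char d p l (Rl p l u) \<chi>3" and c4: "is_char d p l (Rl p l u) \<chi>4"
  and uE: "ecls p l E \<in> qunits d p l (Rl p l u)" and uA: "ecls p l A \<in> qunits d p l (Rl p l u)"
  and uw: "ecls p l w \<in> qunits d p l (Rl p l u)" and uw': "ecls p l w' \<in> qunits d p l (Rl p l u)"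
  and ww: "econg p l (emul d w w') (1,0)"
  and ss: "\<chi>3 (ecls p l w) * inverse (\<chi>4 (ecls p l w)) \<noteq> 1"
  and X: "X \<noteq> 0"
  shows "X * (\<chi>3 (ecls p l E) * \<chi>4 (ecls p l A)) \<noteq> X * (\<chi>3 (ecls p l (emul d E w)) * \<chi>4 (ecls p l (emul d A w')))"
proof
  assume eq: "X * (\<chi>3 (ecls p l E) * \<chi>4 (ecls p l A)) = X * (\<chi>3 (ecls p l (emul d E w)) * \<chi>4 (ecls p l (emul d A w')))"
  have m3: "\<chi>3 (ecls p l (emul d E w)) = \<chi>3 (ecls p l E) * \<chi>3 (ecls p l w)" by (rule char_mul[OF c3 uE uw])
  have m4: "\<chi>4 (ecls p l (emul d A w')) = \<chi>4 (ecls p l A) * \<chi>4 (ecls p l w')" by (rule char_mul[OF c4 uA uw'])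
  have n: "\<chi>3 (ecls p l E) \<noteq> 0" "\<chi>4 (ecls p l A) \<noteq> 0" "\<chi>4 (ecls p l w) \<noteq> 0"
    using char_nz c3 c4 uE uA uw by blast+
  have "\<chi>3 (ecls p l w) * \<chi>4 (ecls p l w') = 1"
    using eq m3 m4 X n by (simp add: field_simps)
  moreover have "\<chi>4 (ecls p l w) * \<chi>4 (ecls p l w') = 1"
  proof -
    have "\<chi>4 (ecls p l w) * \<chi>4 (ecls p l w') = \<chi>4 (ecls p l (emul d w w'))" using char_mul[OF c4 uw uw'] by simp
    also have "ecls p l (emul d w w') = ecls p l (1,0)" using ww by (simp add: ecls_eq_iff)
    finally show ?thesis using char_one[OF c4] by simp
  qed
  ultimately have "\<chi>3 (ecls p l w) = \<chi>4 (ecls p l w)"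
    by (metis mult.commute mult_cancel_left n(3) mult_1 mult.left_neutral mult_eq_0_iff mult.assoc mult_cancel_right)
  then show False using ss n(3) by simp
qed

definition rq :: "'a::comm_ring_1 \<Rightarrow> nat \<Rightarrow> 'a \<Rightarrow> 'a \<Rightarrow> 'a \<Rightarrow> 'a \<Rightarrow> 'a mat" where
  "rq p l a b c e = cq p l (a,0) (b,0) (c,0) (e,0)"

lemma mmul_rq: "mmul d p l (rq p l a b c e) (rq p l a' b' c' e') =
  rq p l (a*a' + b*c') (a*b' + b*e') (c*a' + e*c') (c*b' + e*e')"
  by (simp add: rq_def emul_def eadd_def)

lemma rq_eqI: "a = a' \<Longrightarrow> b = b' \<Longrightarrow> c = c' \<Longrightarrow> e = e' \<Longrightarrow> rq p l a b c e = rq p l a' b' c' e'"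
  by simp


lemma mackey_GL:
  fixes p d :: "'a::idom"
  assumes dvr: "dvr_unif p" and l2: "2 \<le> l" and i1: "1 \<le> i" and il: "i \<le> l - 1"
  and c1: "is_char d p l (Rl p l False) \<chi>1" and c2: "is_char d p l (Rl p l False) \<chi>2"
  and c3: "is_char d p l (Rl p l False) \<chi>3" and c4: "is_char d p l (Rl p l False) \<chi>4"
  and ss: "ss_pair p l \<chi>3 \<chi>4"
  and x: "x \<in> Bor d p l False" and xn: "x \<notin> Bsub d p l False i"
  shows "\<exists>k\<in>Bsub d p l False i. \<exists>k'\<in>Bsub d p l False i. mmul d p l x k = mmul d p l k' x \<and>
    thet \<chi>1 \<chi>2 \<chi>3 \<chi>4 d p l False i k \<noteq> thet \<chi>1 \<chi>2 \<chi>3 \<chi>4 d p l False i k'"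
proof -
  obtain a b e where r: "okR False a" "okR False b" "okR False e" "x = cq p l a b (0,0) e"
    using Bor_rep[OF x] by metis
  define \<alpha> where "\<alpha> = fst a"
  define \<beta> where "\<beta> = fst b"
  define \<gamma> where "\<gamma> = fst e"
  have xr: "x = rq p l \<alpha> \<beta> 0 \<gamma>" using r unfolding rq_def okR_def \<alpha>_def \<beta>_def \<gamma>_def
    by (metis prod.collapse)
  obtain a' e' where un: "okR False e'" "econg p l (emul d e e') (1,0)"
    using Bor_units[OF x r(4)] by blast
  have h: "p ^ l dvd (\<gamma> * fst e' - 1)" using un r(3) unfolding econg_def emul_def okR_def \<gamma>_def by simp
  have l1: "1 \<le> l" using l2 by simp
  obtain gi where gi: "\<gamma> * gi = 1" using unit_mod[OF dvr l1 h] by blast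
  define pi where "pi = p ^ i"
  have nd: "\<not> p ^ l dvd (pi * (\<alpha> - \<gamma> + pi * \<beta>))"
  proof
    assume h: "p ^ l dvd (pi * (\<alpha> - \<gamma> + pi * \<beta>))"
    have "x \<in> Bsub d p l False i"
      using Bsub_iff2[OF x xr[unfolded rq_def]] h
      by (simp add: tau_False econg_def emul_def eadd_def eneg_def pi_def algebra_simps)
    then show False using xn by simp
  qed
  define c0 where "c0 = gi * (\<alpha> - \<gamma> + pi * \<beta>)"
  have dc: "\<alpha> - \<gamma> + pi * \<beta> = \<gamma> * c0" using gi unfolding c0_def by algebra
  have "c0 \<noteq> 0" using nd dc by auto
  then obtain v v' m where vm: "v * v' = 1" "c0 = v * p ^ m" using dvr_val[OF dvr] by blast
  define pm where "pm = p ^ m"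
  have "pi * (\<alpha> - \<gamma> + pi * \<beta>) = pi * (\<gamma> * c0)" by (simp only: dc)
  also have "\<dots> = p ^ (i + m) * (\<gamma> * v)" unfolding vm(2) pi_def power_add by (simp add: algebra_simps)
  finally have "pi * (\<alpha> - \<gamma> + pi * \<beta>) = p ^ (i + m) * (\<gamma> * v)" .
  then have "\<not> p ^ l dvd (p ^ (i + m) * (\<gamma> * v))" using nd by simp
  then have iml: "i + m < l" by (rule pow_lt[OF dvr])
  obtain k0 where lk: "l = Suc (m + i + k0)" using iml by (metis add.commute add_Suc less_iff_Suc_add)
  obtain i1 where ii: "i = Suc i1" using i1 by (cases i) auto
  define pk where "pk = p ^ k0"
  define pi1 where "pi1 = p ^ i1"
  define P where "P = p ^ l"
  have Pf: "P = p * pm * pi * pk" unfolding P_def pm_def pi_def pk_def lk by (simp add: power_add)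
  have pif: "pi = p * pi1" unfolding pi_def pi1_def ii by simp
  obtain aw where aw: "\<chi>3 (ecls p l (1 + p ^ (l - 1) * aw, 0)) * inverse (\<chi>4 (ecls p l (1 + p ^ (l - 1) * aw, 0))) \<noteq> 1"
    using ss unfolding ss_pair_def by blast
  define pl1 where "pl1 = pm * pi * pk"
  have pl1f: "p ^ (l - 1) = pl1" unfolding pl1_def pm_def pi_def pk_def lk by (simp add: power_add)
  define u0 where "u0 = aw * v'"
  define E0 where "E0 = 1 + pi * pk * u0"
  have "\<not> p dvd E0"
  proof
    assume "p dvd E0"
    moreover have "p dvd pi * pk * u0" using pif by simp
    ultimately have "p dvd E0 - pi * pk * u0" by (rule dvd_diff)
    then show False using dvr_not_unit[OF dvr] E0_def by simp
  qed
  then obtain Ei where Ei: "E0 * Ei = 1" using dvr_unit[OF dvr] by blast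
  define B0 where "B0 = pk * u0"
  define B1 where "B1 = gi * (\<alpha> * pk * u0 + \<beta> * pi * pk * u0)"
  define k where "k = rq p l 1 B0 0 E0"
  define k' where "k' = rq p l 1 B1 0 E0"
  have key: "1 - E0 + pi * B1 = pl1 * aw"
    unfolding E0_def B1_def pl1_def u0_def using gi dc vm(1) vm(2)[folded pm_def] by algebra
  have kGl: "k \<in> Gl d p l False"
  proof -
    define K where "K = rq p l 1 (- (B0 * Ei)) 0 Ei"
    have "mmul d p l k K = mone p l" "mmul d p l K k = mone p l"
      unfolding k_def K_def mmul_rq mone_cq rq_def[symmetric]
      using Ei by (auto intro!: rq_eqI simp: algebra_simps)
    moreover have "k \<in> mats (Rl p l False)" "K \<in> mats (Rl p l False)"
      unfolding k_def K_def rq_def by (simp_all add: mats_Rl_I)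
    ultimately show ?thesis unfolding Gl_def by blast
  qed
  have kB: "k \<in> Bor d p l False" using Bor_I[OF kGl] k_def rq_def by metis
  have kH: "k \<in> Bsub d p l False i"
    using Bsub_iff2[OF kB k_def[unfolded rq_def]]
    by (simp add: tau_False econg_def emul_def eadd_def eneg_def E0_def B0_def pi_def algebra_simps)
  have comm: "mmul d p l x k = mmul d p l k' x"
    unfolding xr k_def k'_def mmul_rq
  proof (rule rq_eqI)
    show "\<alpha> * B0 + \<beta> * E0 = 1 * \<beta> + B1 * \<gamma>"
      unfolding B0_def B1_def E0_def using gi by algebra
  qed simp_all
  obtain xi where xi: "xi \<in> Bor d p l False" "mmul d p l x xi = mone p l" "mmul d p l xi x = mone p l"
    using Bor_inv[OF x] by blast
  have k'B: "k' \<in> Bor d p l False"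
  proof -
    have k'b: "k' \<in> mats (bigO p l)" unfolding k'_def rq_def by simp
    have "k' = mmul d p l k' (mmul d p l x xi)" using xi(2) mone_right[OF k'b] by simp
    also have "\<dots> = mmul d p l (mmul d p l k' x) xi"
      using mmul_assoc_big[OF k'b Bor_big[OF x] Bor_big[OF xi(1)]] by simp
    also have "\<dots> = mmul d p l (mmul d p l x k) xi" using comm by simp
    finally show ?thesis using Bor_mmul[OF Bor_mmul[OF x kB] xi(1)] by simp
  qed
  have k'H: "k' \<in> Bsub d p l False i"
  proof -
    have "pi * (1 - E0 + pi * B1) = pi * (pl1 * aw)" by (simp only: key)
    also have "\<dots> = P * (pi1 * aw)" unfolding pl1_def Pf pif by (simp add: algebra_simps)
    finally have "pi * (1 - E0 + pi * B1) = P * (pi1 * aw)" .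
    then have "P dvd pi * (1 - E0 + pi * B1)" by (rule dvdI)
    then show ?thesis
      using Bsub_iff2[OF k'B k'_def[unfolded rq_def]]
      by (simp add: tau_False econg_def emul_def eadd_def eneg_def P_def pi_def algebra_simps)
  qed
  define w where "w = (1 + pl1 * aw, (0::'a))"
  define w' where "w' = (1 - pl1 * aw, (0::'a))"
  have ww: "econg p l (emul d w w') (1,0)"
  proof -
    have "(1 + pl1 * aw) * (1 - pl1 * aw) - 1 = P * (- (pi1 * pm * pk * aw * aw))"
      unfolding pl1_def Pf pif by (simp add: algebra_simps)
    then have "P dvd (1 + pl1 * aw) * (1 - pl1 * aw) - 1" by (rule dvdI)
    then show ?thesis unfolding w_def w'_def by (simp add: econg_def emul_def P_def)
  qed
  have uw: "ecls p l w \<in> qunits d p l (Rl p l False)" "ecls p l w' \<in> qunits d p l (Rl p l False)"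
    using qunits_I[of False w w' p l d] qunits_I[of False w' w p l d] ww
    by (simp_all add: w_def w'_def emul_def mult.commute)
  have uE: "ecls p l (E0,0) \<in> qunits d p l (Rl p l False)"
    by (rule qunits_I[of _ _ "(Ei,0)"]) (simp_all add: emul_def Ei)
  have uA: "ecls p l (1,0) \<in> qunits d p l (Rl p l False)"
    by (rule qunits_I[of _ _ "(1,0)"]) simp_all
  have X: "\<chi>1 (ecls p l (1,0)) * \<chi>2 (ecls p l (E0,0)) \<noteq> 0"
    using char_nz[OF c1 uA] char_nz[OF c2 uE] by simp
  have t1: "thet \<chi>1 \<chi>2 \<chi>3 \<chi>4 d p l False i k =
     \<chi>1 (ecls p l (1,0)) * \<chi>2 (ecls p l (E0,0)) * (\<chi>3 (ecls p l (E0,0)) * \<chi>4 (ecls p l (1,0)))"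
  proof -
    have "eadd (1,0) (emul d (tau d p False i) (B0,0)) = (E0,0)"
      by (simp add: tau_False emul_def eadd_def E0_def B0_def pi_def algebra_simps)
    moreover have "eadd (E0,0) (eneg (emul d (tau d p False i) (B0,0))) = (1,0)"
      by (simp add: tau_False emul_def eadd_def eneg_def E0_def B0_def pi_def algebra_simps)
    ultimately show ?thesis unfolding k_def rq_def thet_cq by simp
  qed
  have e1: "ecls p l (eadd (1,0) (emul d (tau d p False i) (B1,0))) = ecls p l (emul d (E0,0) w)"
  proof -
    have "1 + pi * B1 - E0 * (1 + pl1 * aw) = P * (- (aw * pi1 * pk * u0))"
      using key unfolding E0_def pl1_def Pf pif by algebra
    then have "P dvd 1 + pi * B1 - E0 * (1 + pl1 * aw)" by (rule dvdI)
    then show ?thesis unfolding w_def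
      by (simp add: ecls_eq_iff tau_False econg_def emul_def eadd_def P_def pi_def)
  qed
  have e2: "ecls p l (eadd (E0,0) (eneg (emul d (tau d p False i) (B1,0)))) = ecls p l (emul d (1,0) w')"
  proof -
    have "E0 - pi * B1 = 1 - pl1 * aw" using key by algebra
    then show ?thesis unfolding w'_def by (simp add: tau_False emul_def eadd_def eneg_def pi_def)
  qed
  have t2: "thet \<chi>1 \<chi>2 \<chi>3 \<chi>4 d p l False i k' =
     \<chi>1 (ecls p l (1,0)) * \<chi>2 (ecls p l (E0,0)) * (\<chi>3 (ecls p l (emul d (E0,0) w)) * \<chi>4 (ecls p l (emul d (1,0) w')))"
    unfolding k'_def rq_def thet_cq e1 e2 by simp
  have ssw: "\<chi>3 (ecls p l w) * inverse (\<chi>4 (ecls p l w)) \<noteq> 1"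
    using aw unfolding w_def pl1f .
  have "thet \<chi>1 \<chi>2 \<chi>3 \<chi>4 d p l False i k \<noteq> thet \<chi>1 \<chi>2 \<chi>3 \<chi>4 d p l False i k'"
    unfolding t1 t2 by (rule final_ne[OF c3 c4 uE uA uw(1) uw(2) ww ssw X])
  then show ?thesis using kH k'H comm by blast
qed


lemma dvdE': "P dvd X \<Longrightarrow> (\<And>q. X = P * q \<Longrightarrow> thesis) \<Longrightarrow> thesis" by (auto elim: dvdE)

lemma GU_rep:
  fixes p d :: "'a::idom"
  assumes dvr: "dvr_unif p" and l2: "2 \<le> l" and p2: "\<not> p dvd 2"
  and x: "x \<in> Bor d p l True"
  shows "\<exists>a0 a1 nI t1. (a0 * a0 - d * (a1 * a1)) * nI = 1 \<and>
     x = cq p l (a0, a1) (emul d (0, t1) (a0 * nI, a1 * nI)) (0,0) (a0 * nI, a1 * nI)"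
proof -
  define P where "P = p ^ l"
  obtain a b e where r: "x = cq p l a b (0,0) e" using Bor_rep[OF x] by metis
  obtain a0 a1 where a: "a = (a0, a1)" by (cases a)
  obtain b0 b1 where b: "b = (b0, b1)" by (cases b)
  obtain e0 e1 where e: "e = (e0, e1)" by (cases e)
  obtain a' e' where "econg p l (emul d a a') (1,0)" using Bor_units[OF x r] by blast
  moreover obtain f0 f1 where f: "a' = (f0, f1)" by (cases a')
  ultimately have h0: "P dvd a0 * f0 + d * (a1 * f1) - 1" "P dvd a0 * f1 + a1 * f0"
    unfolding a P_def by (simp_all add: econg_def emul_def)
  have u: "econg p l (emul d (econj e) a) (1,0) \<and> econg p l (eadd (emul d (econj e) b) (emul d (econj b) e)) (0,0)"
    by (rule Bor_unitary[OF x r]) simp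
  have h1: "P dvd e0 * a0 - d * (e1 * a1) - 1" "P dvd e0 * a1 - e1 * a0"
    and h2: "P dvd 2 * (e0 * b0 - d * (e1 * b1))"
    using u unfolding a b e P_def by (simp_all add: econg_def emul_def eadd_def econj_def algebra_simps)
  define N where "N = a0 * a0 - d * (a1 * a1)"
  have "P dvd N * (f0 * f0 - d * (f1 * f1)) - 1"
  proof -
    obtain q0 where q0: "a0 * f0 + d * (a1 * f1) - 1 = P * q0" using h0(1) by (rule dvdE')
    obtain q1 where q1: "a0 * f1 + a1 * f0 = P * q1" using h0(2) by (rule dvdE')
    have "N * (f0 * f0 - d * (f1 * f1)) - 1 = P * (q0 * (a0 * f0 + d * (a1 * f1) + 1) - d * P * q1 * q1)"
      using q0 q1 unfolding N_def by algebra
    then show ?thesis by (rule dvdI)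
  qed
  moreover have l1: "1 \<le> l" using l2 by simp
  ultimately obtain nI where nI: "N * nI = 1" using unit_mod[OF dvr l1] P_def by blast
  obtain qX where qX: "e0 * a0 - d * (e1 * a1) - 1 = P * qX" using h1(1) by (rule dvdE')
  obtain qY where qY: "e0 * a1 - e1 * a0 = P * qY" using h1(2) by (rule dvdE')
  have de0: "e0 - a0 * nI = P * (nI * (a0 * qX - d * a1 * qY))"
    using qX qY nI unfolding N_def by algebra
  have de1: "e1 - a1 * nI = P * (nI * (a1 * qX - a0 * qY))"
    using qX qY nI unfolding N_def by algebra
  have "\<not> p dvd 2 * 1" using p2 by simp
  obtain hh :: 'a where hh: "2 * hh = 1" using dvr_unit[OF dvr p2] by blast
  obtain qZ where qZ: "2 * (e0 * b0 - d * (e1 * b1)) = P * qZ" using h2 by (rule dvdE')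
  define t0 where "t0 = b0 * a0 - d * (b1 * a1)"
  define t1 where "t1 = b1 * a0 - b0 * a1"
  have t0d: "t0 = P * (N * (hh * qZ) - N * (b0 * (nI * (a0 * qX - d * a1 * qY)) - d * b1 * (nI * (a1 * qX - a0 * qY))))"
  proof -
    have "e0 * b0 - d * (e1 * b1) = (2 * hh) * (e0 * b0 - d * (e1 * b1))" by (simp add: hh)
    also have "\<dots> = hh * (2 * (e0 * b0 - d * (e1 * b1)))" by (simp only: ac_simps)
    also have "\<dots> = hh * (P * qZ)" by (simp only: qZ)
    also have "\<dots> = P * (hh * qZ)" by (simp only: ac_simps)
    finally have "e0 * b0 - d * (e1 * b1) = P * (hh * qZ)" .
    then show ?thesis using de0 de1 nI unfolding t0_def N_def by algebra
  qed
  have "x = cq p l (a0, a1) (emul d (0, t1) (a0 * nI, a1 * nI)) (0,0) (a0 * nI, a1 * nI)"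
    unfolding r a b e cq_eq_iff
  proof (intro conjI)
    show "econg p l (a0, a1) (a0, a1)" by simp
    show "econg p l (0,0) (0,0)" by simp
    show "econg p l (e0, e1) (a0 * nI, a1 * nI)" unfolding econg_def
      using de0 de1 by (simp add: P_def dvdI)
    have "b0 - fst (emul d (0, t1) (a0 * nI, a1 * nI)) = t0 * (a0 * nI)"
      using nI unfolding t0_def t1_def N_def emul_def by simp algebra
    moreover have "b1 - snd (emul d (0, t1) (a0 * nI, a1 * nI)) = t0 * (a1 * nI)"
      using nI unfolding t0_def t1_def N_def emul_def by simp algebra
    ultimately show "econg p l (b0, b1) (emul d (0, t1) (a0 * nI, a1 * nI))" unfolding econg_def
      using t0d by (simp add: P_def)
  qed
  then show ?thesis using nI N_def by blast
qed


lemma mackey_GU: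
  fixes p d :: "'a::idom"
  assumes dvr: "dvr_unif p" and l2: "2 \<le> l" and i1: "1 \<le> i" and il: "i \<le> l - 1"
  and p2: "\<not> p dvd 2" and du: "d dvd 1"
  and c1: "is_char d p l (Rl p l True) \<chi>1" and c2: "is_char d p l (Rl p l True) \<chi>2"
  and c3: "is_char d p l (Rl p l True) \<chi>3" and c4: "is_char d p l (Rl p l True) \<chi>4"
  and ss: "ss_pair p l \<chi>3 \<chi>4"
  and x: "x \<in> Bor d p l True" and xn: "x \<notin> Bsub d p l True i"
  shows "\<exists>k\<in>Bsub d p l True i. \<exists>k'\<in>Bsub d p l True i. mmul d p l x k = mmul d p l k' x \<and>
    thet \<chi>1 \<chi>2 \<chi>3 \<chi>4 d p l True i k \<noteq> thet \<chi>1 \<chi>2 \<chi>3 \<chi>4 d p l True i k'"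
proof -
  obtain a0 a1 nI t1 where nI: "(a0 * a0 - d * (a1 * a1)) * nI = 1"
    and xr: "x = cq p l (a0, a1) (emul d (0, t1) (a0 * nI, a1 * nI)) (0,0) (a0 * nI, a1 * nI)"
    using GU_rep[OF dvr l2 p2 x] by blast
  define N where "N = a0 * a0 - d * (a1 * a1)"
  have NnI: "N * nI = 1" using nI N_def by simp
  define pi where "pi = p ^ i"
  define P where "P = p ^ l"
  define c0 where "c0 = N - 1 + d * pi * t1"
  have nd: "\<not> P dvd (pi * c0)"
  proof
    assume h: "P dvd (pi * c0)"
    have "x \<in> Bsub d p l True i"
    proof -
      have "emul d (tau d p True i) (eadd (eadd (a0, a1) (eneg (a0 * nI, a1 * nI)))
              (emul d (tau d p True i) (emul d (0, t1) (a0 * nI, a1 * nI))))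
            = ((pi * c0) * (d * a1 * nI), (pi * c0) * (a0 * nI))"
        using NnI unfolding tau_True emul_def eadd_def eneg_def c0_def N_def pi_def
        by simp algebra
      then show ?thesis using Bsub_iff2[OF x xr] h
        by (simp add: econg_def P_def dvd_mult2)
    qed
    then show False using xn by simp
  qed
  have "c0 \<noteq> 0" using nd by auto
  then obtain v v' m where vm: "v * v' = 1" "c0 = v * p ^ m" using dvr_val[OF dvr] by blast
  have "pi * c0 = p ^ (i + m) * v" unfolding vm(2) pi_def power_add by (simp add: algebra_simps)
  then have "\<not> p ^ l dvd (p ^ (i + m) * v)" using nd P_def by simp
  then have iml: "i + m < l" by (rule pow_lt[OF dvr])
  obtain k0 where lk: "l = Suc (m + i + k0)" using iml by (metis add.commute add_Suc less_iff_Suc_add)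
  obtain i1 where ii: "i = Suc i1" using i1 by (cases i) auto
  define pm where "pm = p ^ m"
  define pk where "pk = p ^ k0"
  define pi1 where "pi1 = p ^ i1"
  have Pf: "P = p * pm * pi * pk" unfolding P_def pm_def pi_def pk_def lk by (simp add: power_add)
  have pif: "pi = p * pi1" unfolding pi_def pi1_def ii by simp
  have c0f: "c0 = v * pm" using vm pm_def by simp
  obtain aw where aw: "\<chi>3 (ecls p l (1 + p ^ (l - 1) * aw, 0)) * inverse (\<chi>4 (ecls p l (1 + p ^ (l - 1) * aw, 0))) \<noteq> 1"
    using ss unfolding ss_pair_def by blast
  define pl1 where "pl1 = pm * pi * pk"
  have pl1f: "p ^ (l - 1) = pl1" unfolding pl1_def pm_def pi_def pk_def lk by (simp add: power_add)
  obtain hh :: 'a where hh: "2 * hh = 1" using dvr_unit[OF dvr p2] by blast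
  obtain dI where dI: "d * dI = 1" using du by (auto elim: dvdE)
  define pj where "pj = pi * pk"
  define y where "y = - (aw * v' * hh)"
  define A0 where "A0 = 1 + pj * y"
  have "\<not> p dvd A0"
  proof
    assume "p dvd A0"
    moreover have "p dvd pj * y" using pif pj_def by simp
    ultimately have "p dvd A0 - pj * y" by (rule dvd_diff)
    then show False using dvr_not_unit[OF dvr] A0_def by simp
  qed
  then obtain Ai where Ai: "A0 * Ai = 1" using dvr_unit[OF dvr] by blast
  define s where "s = - (2 * pk * y + pk * pj * y * y) * Ai * Ai * dI"
  define r where "r = d * pi * (A0 * s)"
  have rf: "r = - (2 * pj * y + pj * pj * y * y) * Ai"
    using Ai dI unfolding r_def s_def pj_def by algebra
  have EA: "Ai - A0 = r"
    using Ai unfolding rf A0_def by algebra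
  define A where "A = (A0, (0::'a))"
  define E where "E = (Ai, (0::'a))"
  define B where "B = ((0::'a), A0 * s)"
  define \<alpha> where "\<alpha> = (a0, a1)"
  define \<gamma> where "\<gamma> = (a0 * nI, a1 * nI)"
  define \<beta> where "\<beta> = emul d (0, t1) \<gamma>"
  define B' where "B' = emul d (eadd (emul d \<alpha> B) (emul d \<beta> (eadd E (eneg A)))) (econj \<alpha>)"
  have B'f: "B' = (0, A0 * s * (1 + c0))"
    using NnI EA unfolding B'_def \<alpha>_def B_def \<beta>_def \<gamma>_def E_def A_def c0_def N_def r_def
      emul_def eadd_def eneg_def econj_def
    by simp algebra
  have tB: "emul d (tau d p True i) B = (r, 0)"
    unfolding tau_True B_def r_def pi_def by (simp add: emul_def)
  have tB': "emul d (tau d p True i) B' = (r * (1 + c0), 0)"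
    unfolding tau_True B'f r_def pi_def by (simp add: emul_def algebra_simps)
  define k where "k = cq p l A B (0,0) E"
  define k' where "k' = cq p l A B' (0,0) E"
  have xr': "x = cq p l \<alpha> \<beta> (0,0) \<gamma>" using xr \<alpha>_def \<beta>_def \<gamma>_def by simp
  have AiA: "Ai * A0 = 1" using Ai by (simp add: mult.commute)
  have kGl: "k \<in> Gl d p l True"
  proof -
    define K where "K = cq p l E (eneg B) (0,0) A"
    have "mmul d p l k K = mone p l" "mmul d p l K k = mone p l"
      unfolding k_def K_def mmul_cq mone_cq A_def E_def B_def
      by (simp_all add: emul_def eadd_def eneg_def Ai AiA algebra_simps)
    moreover have "k \<in> mats (Rl p l True)" "K \<in> mats (Rl p l True)"
      unfolding k_def K_def by (simp_all add: mats_Rl_I okR_def)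
    moreover have "mmul d p l (mstar d p l k) k = mone p l"
      unfolding k_def mstar_cq mmul_cq mone_cq A_def E_def B_def
      by (simp add: emul_def eadd_def eneg_def econj_def Ai AiA algebra_simps)
    ultimately show ?thesis unfolding Gl_def by blast
  qed
  have kB: "k \<in> Bor d p l True" using Bor_I[OF kGl] k_def by metis
  have kH: "k \<in> Bsub d p l True i"
  proof -
    have "eadd (eadd A (eneg E)) (emul d (tau d p True i) B) = (0,0)"
      unfolding tB A_def E_def using EA by (simp add: eadd_def eneg_def algebra_simps)
    then show ?thesis using Bsub_iff2[OF kB k_def] by simp
  qed
  have comm: "mmul d p l x k = mmul d p l k' x"
  proof -
    have "eadd (emul d \<alpha> B) (emul d \<beta> E) = eadd (emul d A \<beta>) (emul d B' \<gamma>)"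
      using NnI unfolding B'_def \<alpha>_def \<beta>_def \<gamma>_def A_def E_def N_def emul_def eadd_def eneg_def econj_def
      by simp algebra
    moreover have "emul d \<alpha> A = emul d A \<alpha>" "emul d \<gamma> E = emul d E \<gamma>"
      by (simp_all add: emul_def algebra_simps)
    ultimately show ?thesis unfolding xr' k_def k'_def mmul_cq by simp
  qed
  obtain xi where xi: "xi \<in> Bor d p l True" "mmul d p l x xi = mone p l" "mmul d p l xi x = mone p l"
    using Bor_inv[OF x] by blast
  have k'B: "k' \<in> Bor d p l True"
  proof -
    have k'b: "k' \<in> mats (bigO p l)" unfolding k'_def by simp
    have "k' = mmul d p l k' (mmul d p l x xi)" using xi(2) mone_right[OF k'b] by simp
    also have "\<dots> = mmul d p l (mmul d p l k' x) xi"
      using mmul_assoc_big[OF k'b Bor_big[OF x] Bor_big[OF xi(1)]] by simp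
    also have "\<dots> = mmul d p l (mmul d p l x k) xi" using comm by simp
    finally show ?thesis using Bor_mmul[OF Bor_mmul[OF x kB] xi(1)] by simp
  qed
  have rc0: "r * c0 = pl1 * Ai * (aw - pj * y * y * v)"
    using rf c0f vm(1) hh unfolding y_def pl1_def pj_def by algebra
  have k'H: "k' \<in> Bsub d p l True i"
  proof -
    have "eadd (eadd A (eneg E)) (emul d (tau d p True i) B') = (r * c0, 0)"
      unfolding tB' A_def E_def using EA by (simp add: eadd_def eneg_def algebra_simps)
    moreover have "pi * (r * c0) = P * (pi1 * Ai * (aw - pj * y * y * v))"
      unfolding rc0 pl1_def Pf pif by (simp add: algebra_simps)
    ultimately show ?thesis using Bsub_iff2[OF k'B k'_def]
      by (simp add: tau_True econg_def emul_def P_def pi_def dvdI)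
  qed
  define w where "w = (1 + pl1 * aw, (0::'a))"
  define w' where "w' = (1 - pl1 * aw, (0::'a))"
  have ww: "econg p l (emul d w w') (1,0)"
  proof -
    have "(1 + pl1 * aw) * (1 - pl1 * aw) - 1 = P * (- (pi1 * pm * pk * aw * aw))"
      unfolding pl1_def Pf pif by (simp add: algebra_simps)
    then have "P dvd (1 + pl1 * aw) * (1 - pl1 * aw) - 1" by (rule dvdI)
    then show ?thesis unfolding w_def w'_def by (simp add: econg_def emul_def P_def)
  qed
  have uw: "ecls p l w \<in> qunits d p l (Rl p l True)" "ecls p l w' \<in> qunits d p l (Rl p l True)"
    using qunits_I[of True w w' p l d] qunits_I[of True w' w p l d] ww
    by (simp_all add: w_def w'_def emul_def mult.commute okR_def)
  have uE: "ecls p l E \<in> qunits d p l (Rl p l True)"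
    by (rule qunits_I[of _ _ "(A0,0)"]) (simp_all add: emul_def E_def AiA okR_def)
  have uA: "ecls p l A \<in> qunits d p l (Rl p l True)"
    by (rule qunits_I[of _ _ "(Ai,0)"]) (simp_all add: emul_def A_def Ai okR_def)
  have X: "\<chi>1 (ecls p l A) * \<chi>2 (ecls p l E) \<noteq> 0"
    using char_nz[OF c1 uA] char_nz[OF c2 uE] by simp
  have t1: "thet \<chi>1 \<chi>2 \<chi>3 \<chi>4 d p l True i k =
     \<chi>1 (ecls p l A) * \<chi>2 (ecls p l E) * (\<chi>3 (ecls p l E) * \<chi>4 (ecls p l A))"
  proof -
    have "eadd A (emul d (tau d p True i) B) = E"
      unfolding tB A_def E_def using EA by (simp add: eadd_def algebra_simps)
    moreover have "eadd E (eneg (emul d (tau d p True i) B)) = A"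
      unfolding tB A_def E_def using EA by (simp add: eadd_def eneg_def algebra_simps)
    ultimately show ?thesis unfolding k_def thet_cq by simp
  qed
  have e1: "ecls p l (eadd A (emul d (tau d p True i) B')) = ecls p l (emul d E w)"
  proof -
    have "A0 + r * (1 + c0) - Ai * (1 + pl1 * aw) = r * c0 - Ai * pl1 * aw"
      unfolding EA[symmetric] by (simp add: algebra_simps)
    also have "\<dots> = P * (- (pi1 * pk * Ai * y * y * v))"
      unfolding rc0 pl1_def Pf pj_def pif by (simp add: algebra_simps)
    finally have "A0 + r * (1 + c0) - Ai * (1 + pl1 * aw) = P * (- (pi1 * pk * Ai * y * y * v))" .
    then have "P dvd A0 + r * (1 + c0) - Ai * (1 + pl1 * aw)" by (rule dvdI)
    then show ?thesis unfolding tB' A_def E_def w_def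
      by (simp add: ecls_eq_iff econg_def emul_def eadd_def P_def)
  qed
  have e2: "ecls p l (eadd E (eneg (emul d (tau d p True i) B'))) = ecls p l (emul d A w')"
  proof -
    have "Ai - r * (1 + c0) - A0 * (1 - pl1 * aw) = P * (pi1 * pk * Ai * (aw * (2 * y + pj * y * y) + y * y * v))"
      using EA rc0 rf unfolding pl1_def Pf pif pj_def by algebra
    then have "P dvd Ai - r * (1 + c0) - A0 * (1 - pl1 * aw)" by (rule dvdI)
    then show ?thesis unfolding tB' A_def E_def w'_def
      by (simp add: ecls_eq_iff econg_def emul_def eadd_def eneg_def P_def)
  qed
  have t2: "thet \<chi>1 \<chi>2 \<chi>3 \<chi>4 d p l True i k' =
     \<chi>1 (ecls p l A) * \<chi>2 (ecls p l E) * (\<chi>3 (ecls p l (emul d E w)) * \<chi>4 (ecls p l (emul d A w')))"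
    unfolding k'_def thet_cq e1 e2 by simp
  have ssw: "\<chi>3 (ecls p l w) * inverse (\<chi>4 (ecls p l w)) \<noteq> 1"
    using aw unfolding w_def pl1f .
  have "thet \<chi>1 \<chi>2 \<chi>3 \<chi>4 d p l True i k \<noteq> thet \<chi>1 \<chi>2 \<chi>3 \<chi>4 d p l True i k'"
    unfolding t1 t2 by (rule final_ne[OF c3 c4 uE uA uw(1) uw(2) ww ssw X])
  then show ?thesis using kH k'H comm by blast
qed


theorem lemma8p1:
  fixes p d :: "'a::idom" and l i :: nat and unitary :: bool
    and \<chi>1 \<chi>2 \<chi>3 \<chi>4 :: "'a cl \<Rightarrow> complex"
  assumes "dvr_unif p" and "pi_complete p"
    and "finite (residue_field p)" and "\<not> p dvd 2"
    and "d dvd 1" and "\<not> (\<exists>x. x * x = d)"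
    and "2 \<le> l"
    and "is_char d p l (Rl p l unitary) \<chi>1" and "is_char d p l (Rl p l unitary) \<chi>2"
    and "is_char d p l (Rl p l unitary) \<chi>3" and "is_char d p l (Rl p l unitary) \<chi>4"
    and "ss_pair p l \<chi>1 \<chi>2" and "ss_pair p l \<chi>3 \<chi>4"
    and "1 \<le> i" and "i \<le> l - 1"
  shows "irred_ind (Bor d p l unitary) (mmul d p l) (Bsub d p l unitary i)
           (\<lambda>x. pchar \<chi>1 \<chi>2 x *
                pchar \<chi>3 \<chi>4 (mmul d p l (minv d p l (Rl p l unitary) (gmat d p l unitary i))
                                       (mmul d p l x (gmat d p l unitary i))))"
proof -
  have th: "(\<lambda>x. pchar \<chi>1 \<chi>2 x *
                pchar \<chi>3 \<chi>4 (mmul d p l (minv d p l (Rl p l unitary) (gmat d p l unitary i))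
                                       (mmul d p l x (gmat d p l unitary i))))
    = thet \<chi>1 \<chi>2 \<chi>3 \<chi>4 d p l unitary i" by (rule ext) (simp add: thet_def)
  show ?thesis unfolding th
  proof (rule mackey_irred[where e = "mone p l"])
    show "finite (Bor d p l unitary)" by (rule finite_Bor[OF assms(3)])
    show "\<forall>x\<in>Bor d p l unitary. \<forall>y\<in>Bor d p l unitary. mmul d p l x y \<in> Bor d p l unitary"
      using Bor_mmul by blast
    show "\<forall>x\<in>Bor d p l unitary. \<forall>y\<in>Bor d p l unitary. \<forall>z\<in>Bor d p l unitary.
      mmul d p l (mmul d p l x y) z = mmul d p l x (mmul d p l y z)"
      using mmul_assoc_big Bor_big by blast
    show "mone p l \<in> Bsub d p l unitary i" by (rule mone_Bsub)
    show "Bsub d p l unitary i \<subseteq> Bor d p l unitary" using Bsub_Bor by blast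
    show "\<forall>x\<in>Bor d p l unitary. mmul d p l (mone p l) x = x" using mone_left Bor_big by blast
    show "\<forall>x\<in>Bor d p l unitary. mmul d p l x (mone p l) = x" using mone_right Bor_big by blast
    show "\<forall>x\<in>Bor d p l unitary. \<exists>y\<in>Bor d p l unitary. mmul d p l x y = mone p l \<and> mmul d p l y x = mone p l"
      using Bor_inv by blast
    show "\<forall>x\<in>Bsub d p l unitary i. \<forall>y\<in>Bsub d p l unitary i. mmul d p l x y \<in> Bsub d p l unitary i"
      using Bsub_mmul by blast
    show "\<forall>x\<in>Bsub d p l unitary i. \<forall>y\<in>Bsub d p l unitary i.
      thet \<chi>1 \<chi>2 \<chi>3 \<chi>4 d p l unitary i (mmul d p l x y) =
      thet \<chi>1 \<chi>2 \<chi>3 \<chi>4 d p l unitary i x * thet \<chi>1 \<chi>2 \<chi>3 \<chi>4 d p l unitary i y"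
      using theta_hom[OF _ _ assms(8-11)] unfolding thet_def by blast
    show "\<forall>x\<in>Bsub d p l unitary i. thet \<chi>1 \<chi>2 \<chi>3 \<chi>4 d p l unitary i x \<noteq> 0"
      using theta_nz[OF _ assms(8-11)] unfolding thet_def by blast
    show "\<forall>x\<in>Bor d p l unitary - Bsub d p l unitary i. \<exists>k\<in>Bsub d p l unitary i. \<exists>k'\<in>Bsub d p l unitary i.
      mmul d p l x k = mmul d p l k' x \<and>
      thet \<chi>1 \<chi>2 \<chi>3 \<chi>4 d p l unitary i k \<noteq> thet \<chi>1 \<chi>2 \<chi>3 \<chi>4 d p l unitary i k'"
    proof
      fix x assume x: "x \<in> Bor d p l unitary - Bsub d p l unitary i"
      show "\<exists>k\<in>Bsub d p l unitary i. \<exists>k'\<in>Bsub d p l unitary i.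
        mmul d p l x k = mmul d p l k' x \<and>
        thet \<chi>1 \<chi>2 \<chi>3 \<chi>4 d p l unitary i k \<noteq> thet \<chi>1 \<chi>2 \<chi>3 \<chi>4 d p l unitary i k'"
      proof (cases unitary)
        case True
        then have u: "unitary = True" by simp
        have xx: "x \<in> Bor d p l True" "x \<notin> Bsub d p l True i" using x unfolding u by auto
        show ?thesis unfolding u
          by (rule mackey_GU[OF assms(1,7,14,15,4,5) assms(8-11)[unfolded u] assms(13) xx])
      next
        case False
        then have u: "unitary = False" by simp
        have xx: "x \<in> Bor d p l False" "x \<notin> Bsub d p l False i" using x unfolding u by auto
        show ?thesis unfolding u
          by (rule mackey_GL[OF assms(1,7,14,15) assms(8-11)[unfolded u] assms(13) xx])
      qed
    qed
  qed
qed


end
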